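(* There exists a constant $c>0$, depending only on $L,\rho,\lambda_\sigma,\kappa,\alpha,\beta,\eta$, such that if Assumption A1 holds, then for every function $F \colon \mathbb{R}^{n_L \times n} \to \mathbb{R}$ that is $1$-Lipschitz with respect to the Hilbert--Schmidt norm, and every $t > 0$, \begin{displaymath} \mathbb{P}(|F(Z_L) - \mathrm{Med}\, F(Z_L)| \ge t) \le 2\exp(-ct^2), \end{displaymath} where $\mathrm{Med}\, F(Z_L)$ denotes any median of $F(Z_L)$. Moreover, if $c_{opt} = c_{opt}(L,\rho,\lambda_\sigma,\kappa,\alpha,\beta,\eta)$ denotes the optimal (largest) constant $c$ for which the inequality $\mathbb{P}(|F(Z_L) - \mathrm{Med}\, F(Z_L)| \ge t) \le 2\exp(-ct^2)$ holds for all models satisfying Assumption A1 with these parameters, all such $F$ and all $t>0$, then, if simultaneously $\alpha\to 0$ and $\eta \to \infty$ while the other parameters are fixed, $c_{opt} \to \infty$.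
   Context: Setting: $L, n, n_0,\ldots,n_L$ are positive integers. For $\ell=0,\ldots,L-1$, $W_\ell$ is an $n_{\ell+1}\times n_\ell$ random matrix, $B_\ell$ a random vector in $\mathbb{R}^{n_{\ell+1}}$, and $\sigma_\ell\colon\mathbb{R}\to\mathbb{R}$ an activation function applied entrywise to matrices. $X$ is an $n_0\times n$ random matrix. Define $Z_0 = \frac{1}{\sqrt{n_0}}X$ and recursively $Z_{\ell+1} = \frac{1}{\sqrt{n_{\ell+1}}}\sigma_\ell(W_\ell Z_\ell + B_\ell \mathbf{1}_n^T)$, where $\mathbf{1}_n$ is the all-ones vector in $\mathbb{R}^n$. Let $\mathbf{X} = (X,(W_\ell,B_\ell)_{\ell=0,\ldots,L-1})$, viewed as a random vector in $\mathbb{R}^N$, $N = nn_0 + \sum_{\ell=0}^{L-1}(n_\ell n_{\ell+1}+n_{\ell+1})$. A random vector $\mathbf{X}$ in $\mathbb{R}^N$ satisfies the subgaussian concentration property with constant $\rho$ if for every $F\colon\mathbb{R}^N\to\mathbb{R}$ that is 1-Lipschitz w.r.t. the Euclidean norm and every $t>0$, $\mathbb{P}(|F(\mathbf{X}) - \mathrm{Med}\,F(\mathbf{X})|\ge t)\le 2\exp(-t^2/\rho^2)$. Assumption A1: (1) $\mathbf{X}$ satisfies the subgaussian concentration property with constant $\rho$; (2) $X$ and $W_\ell$, $\ell=0,\ldots,L-1$, are centered; (3) each $\sigma_\ell$ is $\lambda_\sigma$-Lipschitz with $\sup_x|\sigma_\ell(x)|\le\kappa$; (4) $n/n_\ell\le\alpha$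 for $\ell=1,\ldots,L$; (5) $n_{\ell-1}/n_\ell\le\beta$ for $\ell=1,\ldots,L$; (6) $n_0\ge\eta$. *)

theory Defs
  imports "HOL-Probability.Probability"
begin

text \<open>
  The random vector (X, (W_l, B_l)_l) is modelled through its law: a probability measure
  on the parameter space below (with the Borel sigma-algebra of the product topology).
  X i j : entry (i,j) of the n_0 x n input matrix;
  W l i k : entry (i,k) of the n_(l+1) x n_l weight matrix W_l;
  B l i : entry i of the bias vector B_l in R^(n_(l+1)).
  Entries outside these index ranges are irrelevant (all notions below ignore them).
  dims l = n_l.
\<close>

type_synonym params = "(nat \<Rightarrow> nat \<Rightarrow> real) \<times> (nat \<Rightarrow> nat \<Rightarrow> nat \<Rightarrow> real) \<times> (nat \<Rightarrow> nat \<Rightarrow> real)"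

definition pX :: "params \<Rightarrow> nat \<Rightarrow> nat \<Rightarrow> real" where "pX p = fst p"
definition pW :: "params \<Rightarrow> nat \<Rightarrow> nat \<Rightarrow> nat \<Rightarrow> real" where "pW p = fst (snd p)"
definition pB :: "params \<Rightarrow> nat \<Rightarrow> nat \<Rightarrow> real" where "pB p = snd (snd p)"

definition param_dist :: "nat \<Rightarrow> nat \<Rightarrow> (nat \<Rightarrow> nat) \<Rightarrow> params \<Rightarrow> params \<Rightarrow> real" where
  "param_dist L n dims p q = sqrt (
      (\<Sum>i<dims 0. \<Sum>j<n. (pX p i j - pX q i j)\<^sup>2)
    + (\<Sum>l<L. \<Sum>i<dims (Suc l). \<Sum>k<dims l. (pW p l i k - pW q l i k)\<^sup>2)
    + (\<Sum>l<L. \<Sum>i<dims (Suc l). (pB p l i - pB q l i)\<^sup>2))"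

definition hs_dist :: "nat \<Rightarrow> nat \<Rightarrow> (nat \<Rightarrow> nat \<Rightarrow> real) \<Rightarrow> (nat \<Rightarrow> nat \<Rightarrow> real) \<Rightarrow> real" where
  "hs_dist r s A B = sqrt (\<Sum>i<r. \<Sum>j<s. (A i j - B i j)\<^sup>2)"

fun Zlayer :: "(nat \<Rightarrow> nat) \<Rightarrow> (nat \<Rightarrow> real \<Rightarrow> real) \<Rightarrow> params \<Rightarrow> nat \<Rightarrow> nat \<Rightarrow> nat \<Rightarrow> real" where
  "Zlayer dims \<sigma> p 0 = (\<lambda>i j. pX p i j / sqrt (real (dims 0)))"
| "Zlayer dims \<sigma> p (Suc l) = (\<lambda>i j.
     \<sigma> l ((\<Sum>k<dims l. pW p l i k * Zlayer dims \<sigma> p l k j) + pB p l i) / sqrt (real (dims (Suc l))))"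

definition is_median :: "'a measure \<Rightarrow> ('a \<Rightarrow> real) \<Rightarrow> real \<Rightarrow> bool" where
  "is_median M Y m \<longleftrightarrow>
     measure M {x \<in> space M. Y x \<ge> m} \<ge> 1/2 \<and> measure M {x \<in> space M. Y x \<le> m} \<ge> 1/2"

definition subgauss_conc :: "'a measure \<Rightarrow> ('a \<Rightarrow> 'a \<Rightarrow> real) \<Rightarrow> real \<Rightarrow> bool" where
  "subgauss_conc M d \<rho> \<longleftrightarrow>
     (\<forall>F :: 'a \<Rightarrow> real. (\<forall>p q. \<bar>F p - F q\<bar> \<le> d p q) \<longrightarrow>
        (\<forall>t>0. \<forall>m. is_median M F m \<longrightarrow>
           measure M {p \<in> space M. \<bar>F p - m\<bar> \<ge> t} \<le> 2 * exp (- t\<^sup>2 / \<rho>\<^sup>2)))"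

definition A1 :: "nat \<Rightarrow> nat \<Rightarrow> (nat \<Rightarrow> nat) \<Rightarrow> (nat \<Rightarrow> real \<Rightarrow> real) \<Rightarrow> params measure
                  \<Rightarrow> real \<Rightarrow> real \<Rightarrow> real \<Rightarrow> real \<Rightarrow> real \<Rightarrow> real \<Rightarrow> bool" where
  "A1 L n dims \<sigma> M \<rho> lam \<kappa> \<alpha> \<beta> \<eta> \<longleftrightarrow>
     0 < L \<and> 0 < n \<and> (\<forall>l\<le>L. 0 < dims l) \<and>
     prob_space M \<and> sets M = sets borel \<and>
     subgauss_conc M (param_dist L n dims) \<rho> \<and>
     (\<forall>i<dims 0. \<forall>j<n. integrable M (\<lambda>p. pX p i j) \<and> (\<integral>p. pX p i j \<partial>M) = 0) \<and>
     (\<forall>l<L. \<forall>i<dims (Suc l). \<forall>k<dims l.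
         integrable M (\<lambda>p. pW p l i k) \<and> (\<integral>p. pW p l i k \<partial>M) = 0) \<and>
     (\<forall>l<L. (\<forall>x y. \<bar>\<sigma> l x - \<sigma> l y\<bar> \<le> lam * \<bar>x - y\<bar>) \<and> (\<forall>x. \<bar>\<sigma> l x\<bar> \<le> \<kappa>)) \<and>
     (\<forall>l\<in>{1..L}. real n / real (dims l) \<le> \<alpha>) \<and>
     (\<forall>l\<in>{1..L}. real (dims (l - 1)) / real (dims l) \<le> \<beta>) \<and>
     real (dims 0) \<ge> \<eta>"

definition valid_const :: "nat \<Rightarrow> real \<Rightarrow> real \<Rightarrow> real \<Rightarrow> real \<Rightarrow> real \<Rightarrow> real \<Rightarrow> real \<Rightarrow> bool" where
  "valid_const L \<rho> lam \<kappa> \<alpha> \<beta> \<eta> c \<longleftrightarrow>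
     (\<forall>n dims \<sigma> (M :: params measure). A1 L n dims \<sigma> M \<rho> lam \<kappa> \<alpha> \<beta> \<eta> \<longrightarrow>
        (\<forall>F :: (nat \<Rightarrow> nat \<Rightarrow> real) \<Rightarrow> real.
           (\<forall>A B. \<bar>F A - F B\<bar> \<le> hs_dist (dims L) n A B) \<longrightarrow>
           (\<forall>t>0. \<forall>m. is_median M (\<lambda>p. F (Zlayer dims \<sigma> p L)) m \<longrightarrow>
              measure M {p \<in> space M. \<bar>F (Zlayer dims \<sigma> p L) - m\<bar> \<ge> t}
                \<le> 2 * exp (- c * t\<^sup>2))))"

definition c_opt :: "nat \<Rightarrow> real \<Rightarrow> real \<Rightarrow> real \<Rightarrow> real \<Rightarrow> real \<Rightarrow> real \<Rightarrow> ereal" where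
  "c_opt L \<rho> lam \<kappa> \<alpha> \<beta> \<eta> = Sup {ereal c | c. 0 < c \<and> valid_const L \<rho> lam \<kappa> \<alpha> \<beta> \<eta> c}"

end

theory Submission
  imports Defs "HOL-Library.FuncSet"
begin

definition pidx :: "nat \<Rightarrow> nat \<Rightarrow> (nat \<Rightarrow> nat) \<Rightarrow> ((nat\<times>nat) + ((nat\<times>nat\<times>nat) + (nat\<times>nat))) set" where
  "pidx L n dims = Inl ` ({..<dims 0} \<times> {..<n}) \<union>
     Inr ` (Inl ` (SIGMA l:{..<L}. {..<dims (Suc l)} \<times> {..<dims l}) \<union> Inr ` (SIGMA l:{..<L}. {..<dims (Suc l)}))"

fun coord :: "params \<Rightarrow> ((nat\<times>nat) + ((nat\<times>nat\<times>nat) + (nat\<times>nat))) \<Rightarrow> real" where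
  "coord p (Inl (i,j)) = pX p i j"
| "coord p (Inr (Inl (l,i,k))) = pW p l i k"
| "coord p (Inr (Inr (l,i))) = pB p l i"

lemma finite_pidx: "finite (pidx L n dims)"
  unfolding pidx_def by (intro finite_UnI finite_imageI finite_SigmaI) auto

lemma sum_pidx:
  "(\<Sum>c\<in>pidx L n dims. g c) =
     (\<Sum>i<dims 0. \<Sum>j<n. g (Inl (i,j)))
   + (\<Sum>l<L. \<Sum>i<dims (Suc l). \<Sum>k<dims l. g (Inr (Inl (l,i,k))))
   + (\<Sum>l<L. \<Sum>i<dims (Suc l). g (Inr (Inr (l,i))))"
proof -
  let ?A = "{..<dims 0} \<times> {..<n}"
  let ?B = "SIGMA l:{..<L}. {..<dims (Suc l)} \<times> {..<dims l}"
  let ?C = "SIGMA l:{..<L}. {..<dims (Suc l)}"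
  have fA: "finite ?A" and fB: "finite ?B" and fC: "finite ?C" by auto
  have "(\<Sum>c\<in>pidx L n dims. g c) = (\<Sum>c\<in>Inl ` ?A. g c) + (\<Sum>c\<in>Inr ` (Inl ` ?B \<union> Inr ` ?C). g c)"
    unfolding pidx_def using fA fB fC by (intro sum.union_disjoint) auto
  also have "(\<Sum>c\<in>Inl ` ?A. g c) = (\<Sum>x\<in>?A. g (Inl x))"
    by (subst sum.reindex) (auto simp: inj_on_def)
  also have "\<dots> = (\<Sum>i<dims 0. \<Sum>j<n. g (Inl (i,j)))"
    by (simp add: sum.cartesian_product)
  also have "(\<Sum>c\<in>Inr ` (Inl ` ?B \<union> Inr ` ?C). g c) = (\<Sum>c\<in>Inl ` ?B \<union> Inr ` ?C. g (Inr c))"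
    by (subst sum.reindex) (auto simp: inj_on_def)
  also have "\<dots> = (\<Sum>c\<in>Inl ` ?B. g (Inr c)) + (\<Sum>c\<in>Inr ` ?C. g (Inr c))"
    using fB fC by (intro sum.union_disjoint) auto
  also have "(\<Sum>c\<in>Inl ` ?B. g (Inr c)) = (\<Sum>x\<in>?B. g (Inr (Inl x)))"
    by (subst sum.reindex) (auto simp: inj_on_def)
  also have "\<dots> = (\<Sum>l<L. \<Sum>x\<in>{..<dims (Suc l)} \<times> {..<dims l}. g (Inr (Inl (l,x))))"
    by (simp add: sum.Sigma split_def)
  also have "\<dots> = (\<Sum>l<L. \<Sum>i<dims (Suc l). \<Sum>k<dims l. g (Inr (Inl (l,i,k))))"
    by (simp add: sum.cartesian_product')
  also have "(\<Sum>c\<in>Inr ` ?C. g (Inr c)) = (\<Sum>x\<in>?C. g (Inr (Inr x)))"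
    by (subst sum.reindex) (auto simp: inj_on_def)
  also have "\<dots> = (\<Sum>l<L. \<Sum>i<dims (Suc l). g (Inr (Inr (l,i))))"
    by (simp add: sum.Sigma split_def)
  finally show ?thesis by (simp add: add.assoc)
qed

lemma param_dist_L2: "param_dist L n dims p q = L2_set (\<lambda>c. coord p c - coord q c) (pidx L n dims)"
  unfolding L2_set_def param_dist_def sum_pidx by simp

lemma param_dist_triangle: "param_dist L n dims p r \<le> param_dist L n dims p q + param_dist L n dims q r"
proof -
  have "param_dist L n dims p r = L2_set (\<lambda>c. (coord p c - coord q c) + (coord q c - coord r c)) (pidx L n dims)"
    unfolding param_dist_L2 by simp
  also have "\<dots> \<le> param_dist L n dims p q + param_dist L n dims q r"
    unfolding param_dist_L2 by (rule L2_set_triangle_ineq)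
  finally show ?thesis .
qed

lemma param_dist_sym: "param_dist L n dims p q = param_dist L n dims q p"
  unfolding param_dist_def by (simp add: power2_commute)

lemma param_dist_nonneg: "param_dist L n dims p q \<ge> 0"
  unfolding param_dist_L2 by simp

lemma param_dist_self: "param_dist L n dims p p = 0"
  unfolding param_dist_def by simp

lemma hs_dist_L2: "hs_dist a b A B = L2_set (\<lambda>(i,j). A i j - B i j) ({..<a} \<times> {..<b})"
  unfolding hs_dist_def L2_set_def by (simp add: sum.cartesian_product case_prod_beta)

lemma hs_dist_triangle: "hs_dist a b A C \<le> hs_dist a b A B + hs_dist a b B C"
proof -
  have "hs_dist a b A C = L2_set (\<lambda>x. (case x of (i,j) \<Rightarrow> A i j - B i j) + (case x of (i,j) \<Rightarrow> B i j - C i j)) ({..<a} \<times> {..<b})"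
    unfolding hs_dist_L2 by (intro L2_set_cong) auto
  also have "\<dots> \<le> hs_dist a b A B + hs_dist a b B C"
    unfolding hs_dist_L2 by (rule L2_set_triangle_ineq)
  finally show ?thesis .
qed

lemma hs_dist_sym: "hs_dist a b A B = hs_dist a b B A"
  unfolding hs_dist_def by (simp add: power2_commute)

lemma hs_dist_nonneg: "hs_dist a b A B \<ge> 0"
  unfolding hs_dist_def by (simp add: sum_nonneg)

lemma sqrt_le_sqrt_add3:
  assumes "0 \<le> x" "0 \<le> y" "0 \<le> z" shows "sqrt x \<le> sqrt (x + y + z)" "sqrt y \<le> sqrt (x + y + z)" "sqrt z \<le> sqrt (x + y + z)"
  using assms by (auto intro!: real_sqrt_le_mono)

lemma dist_X_le: "hs_dist (dims 0) n (pX p) (pX q) \<le> param_dist L n dims p q"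
  unfolding hs_dist_def param_dist_def by (intro sqrt_le_sqrt_add3) (auto intro!: sum_nonneg)

lemma dist_W_le:
  assumes "l < L"
  shows "hs_dist (dims (Suc l)) (dims l) (pW p l) (pW q l) \<le> param_dist L n dims p q"
proof -
  have "(\<Sum>i<dims (Suc l). \<Sum>k<dims l. (pW p l i k - pW q l i k)\<^sup>2)
        \<le> (\<Sum>l<L. \<Sum>i<dims (Suc l). \<Sum>k<dims l. (pW p l i k - pW q l i k)\<^sup>2)"
    using assms by (intro member_le_sum) (auto intro!: sum_nonneg)
  moreover have "0 \<le> (\<Sum>i<dims 0. \<Sum>j<n. (pX p i j - pX q i j)\<^sup>2)"
    "0 \<le> (\<Sum>l<L. \<Sum>i<dims (Suc l). \<Sum>k<dims l. (pW p l i k - pW q l i k)\<^sup>2)"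
    "0 \<le> (\<Sum>l<L. \<Sum>i<dims (Suc l). (pB p l i - pB q l i)\<^sup>2)"
    by (intro sum_nonneg; simp)+
  ultimately show ?thesis unfolding hs_dist_def param_dist_def
    by (intro real_sqrt_le_mono) linarith
qed

lemma dist_B_le:
  assumes "l < L"
  shows "sqrt (\<Sum>i<dims (Suc l). (pB p l i - pB q l i)\<^sup>2) \<le> param_dist L n dims p q"
proof -
  have "(\<Sum>i<dims (Suc l). (pB p l i - pB q l i)\<^sup>2)
        \<le> (\<Sum>l<L. \<Sum>i<dims (Suc l). (pB p l i - pB q l i)\<^sup>2)"
    using assms by (intro member_le_sum) (auto intro!: sum_nonneg)
  moreover have "0 \<le> (\<Sum>i<dims 0. \<Sum>j<n. (pX p i j - pX q i j)\<^sup>2)"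
    "0 \<le> (\<Sum>l<L. \<Sum>i<dims (Suc l). \<Sum>k<dims l. (pW p l i k - pW q l i k)\<^sup>2)"
    "0 \<le> (\<Sum>l<L. \<Sum>i<dims (Suc l). (pB p l i - pB q l i)\<^sup>2)"
    by (intro sum_nonneg; simp)+
  ultimately show ?thesis unfolding hs_dist_def param_dist_def
    by (intro real_sqrt_le_mono) linarith
qed

lemma cont_coord: "continuous_on UNIV (\<lambda>q::params. coord q c)"
proof -
  have c1: "continuous_on UNIV (\<lambda>q::params. fst q)" by (intro continuous_on_fst continuous_on_id)
  have c2: "continuous_on UNIV (\<lambda>q::params. fst (snd q))" by (intro continuous_on_fst continuous_on_snd continuous_on_id)
  have c3: "continuous_on UNIV (\<lambda>q::params. snd (snd q))" by (intro continuous_on_snd continuous_on_id)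
  consider (a) i j where "c = Inl (i,j)" | (b) l i k where "c = Inr (Inl (l,i,k))" | (c) l i where "c = Inr (Inr (l,i))"
  proof (cases c)
    case (Inl x) then show ?thesis using that(1) by (cases x) auto
  next
    case (Inr y) then show ?thesis using that(2,3) by (cases y) auto
  qed
  then show ?thesis
  proof cases
    case a then show ?thesis 
      by (simp add: pX_def continuous_on_product_then_coordinatewise[OF continuous_on_product_then_coordinatewise[OF c1]])
  next
    case b then show ?thesis 
      by (simp add: pW_def continuous_on_product_then_coordinatewise[OF continuous_on_product_then_coordinatewise[OF continuous_on_product_then_coordinatewise[OF c2]]])
  next
    case c then show ?thesis 
      by (simp add: pB_def continuous_on_product_then_coordinatewise[OF continuous_on_product_then_coordinatewise[OF c3]])
  qed
qed

lemma cont_param_dist: "continuous_on UNIV (\<lambda>q. param_dist L n dims p q)"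
  unfolding param_dist_L2 L2_set_def
  by (intro continuous_on_real_sqrt continuous_on_sum continuous_on_power continuous_on_diff continuous_on_const cont_coord)

lemma lipschitz_continuous:
  assumes lip: "\<And>p q. \<bar>f p - f q\<bar> \<le> K * param_dist L n dims p q"
  shows "continuous_on UNIV (f :: params \<Rightarrow> real)"
proof -
  have "isCont f p" for p
  proof -
    have "((\<lambda>q. param_dist L n dims p q) \<longlongrightarrow> param_dist L n dims p p) (at p)"
      using cont_param_dist[of L n dims p] continuous_on_eq_continuous_at[OF open_UNIV] isCont_def by blast
    then have "((\<lambda>q. K * param_dist L n dims p q) \<longlongrightarrow> K * param_dist L n dims p p) (at p)"
      by (intro tendsto_mult tendsto_const)
    then have t0: "((\<lambda>q. K * param_dist L n dims p q) \<longlongrightarrow> 0) (at p)"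
      by (simp add: param_dist_self)
    have "((\<lambda>q. f q - f p) \<longlongrightarrow> 0) (at p)"
    proof (rule Lim_null_comparison[OF _ t0], intro always_eventually allI)
      fix q show "norm (f q - f p) \<le> K * param_dist L n dims p q"
        using lip[of q p] by (simp add: param_dist_sym[of L n dims q p])
    qed
    then show ?thesis unfolding isCont_def by (simp add: LIM_zero_iff)
  qed
  then show ?thesis by (simp add: continuous_at_imp_continuous_on)
qed

lemma lipschitz_measurable:
  assumes lip: "\<And>p q. \<bar>f p - f q\<bar> \<le> K * param_dist L n dims p q"
    and sM: "sets M = sets borel"
  shows "f \<in> borel_measurable M"
  using borel_measurable_continuous_onI[OF lipschitz_continuous[OF lip]]
  by (simp add: measurable_cong_sets[OF sM refl])

lemma space_borel_M: "sets M = sets borel \<Longrightarrow> space M = UNIV"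
  using sets_eq_imp_space_eq by fastforce

lemma median_exists:
  assumes P: "prob_space M" and Ym: "Y \<in> borel_measurable M"
  shows "\<exists>m. is_median M Y m"
proof -
  interpret prob_space M by fact
  define N where "N = distr M borel Y"
  interpret N: real_distribution N unfolding N_def using Ym by simp
  have cdfN: "cdf N x = measure M {p\<in>space M. Y p \<le> x}" for x
    unfolding cdf_def N_def using Ym by (subst measure_distr) (auto intro!: arg_cong[where f="measure M"])
  have ltN: "measure N {..<x} = measure M {p\<in>space M. Y p < x}" for x
    unfolding N_def using Ym by (subst measure_distr) (auto intro!: arg_cong[where f="measure M"])
  define S where "S = {x. cdf N x \<ge> 1/2}"
  have "eventually (\<lambda>x. cdf N x > 1/2) at_top"
    using N.cdf_lim_at_top_prob by (rule order_tendstoD) simp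
  then obtain x1 where "cdf N x1 > 1/2" by (metis eventually_at_top_linorder order_refl)
  then have Sne: "S \<noteq> {}" unfolding S_def by (auto intro!: exI[of _ x1])
  have "eventually (\<lambda>x. cdf N x < 1/2) at_bot"
    using N.cdf_lim_at_bot by (rule order_tendstoD) simp
  then obtain x0 where x0: "\<And>x. x \<le> x0 \<Longrightarrow> cdf N x < 1/2" by (auto simp: eventually_at_bot_linorder)
  have Sbdd: "bdd_below S"
    unfolding bdd_below_def S_def by (rule exI[of _ x0]) (metis linorder_not_le mem_Collect_eq x0 less_le_not_le)
  define m where "m = Inf S"
  have "cdf N m \<ge> 1/2"
  proof -
    have "eventually (\<lambda>y. 1/2 \<le> cdf N y) (at_right m)"
    proof (unfold eventually_at_right_field, intro exI[of _ "m+1"] conjI allI impI)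
      show "m < m + 1" by simp
      fix y assume "m < y" "y < m + 1"
      then obtain x where "x \<in> S" "x < y" using Sne unfolding m_def by (meson cInf_lessD)
      then show "1/2 \<le> cdf N y" unfolding S_def using N.cdf_nondecreasing[of x y] by auto
    qed
    moreover have "(cdf N \<longlongrightarrow> cdf N m) (at_right m)"
      using N.cdf_is_right_cont[of m] by (simp add: continuous_within)
    ultimately show ?thesis by (intro tendsto_lowerbound[of "cdf N"]) (auto simp: trivial_limit_at_right_real)
  qed
  moreover have "measure N {..<m} \<le> 1/2"
  proof -
    have "eventually (\<lambda>y. cdf N y \<le> 1/2) (at_left m)"
    proof (unfold eventually_at_left_field, intro exI[of _ "m-1"] conjI allI impI)
      show "m - 1 < m" by simp
      fix y assume "m - 1 < y" "y < m"
      then have "y \<notin> S" unfolding m_def using Sbdd cInf_lower by (metis linorder_not_le)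
      then show "cdf N y \<le> 1/2" unfolding S_def by auto
    qed
    then show ?thesis
      by (intro tendsto_upperbound[OF N.cdf_at_left]) (auto simp: trivial_limit_at_left_real)
  qed
  ultimately have h1: "measure M {p\<in>space M. Y p \<le> m} \<ge> 1/2" and h2: "measure M {p\<in>space M. Y p < m} \<le> 1/2"
    using cdfN ltN by auto
  have "measure M {p\<in>space M. Y p \<ge> m} = 1 - measure M {p\<in>space M. Y p < m}"
  proof -
    have "{p\<in>space M. Y p \<ge> m} = space M - {p\<in>space M. Y p < m}" by auto
    then show ?thesis using Ym by (simp add: prob_compl)
  qed
  with h1 h2 show ?thesis unfolding is_median_def by (intro exI[of _ m]) auto
qed

lemma median_sets:
  assumes "is_median M Y m"
  shows "{p\<in>space M. Y p \<ge> m} \<in> sets M" "{p\<in>space M. Y p \<le> m} \<in> sets M"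
  using assms unfolding is_median_def by (metis measure_notin_sets not_one_le_zero field_sum_of_halves le_numeral_extra(1) divide_nonneg_nonneg zero_less_numeral order.trans linorder_not_le half_gt_zero zero_less_one)+

lemma conc_scaled:
  assumes sg: "subgauss_conc M d \<rho>"
    and lip: "\<And>p q. \<bar>f p - f q\<bar> \<le> K * d p q" and K: "K > 0"
    and med: "is_median M f m" and t: "t > 0"
  shows "measure M {p\<in>space M. \<bar>f p - m\<bar> \<ge> t} \<le> 2 * exp (- t\<^sup>2 / (K * \<rho>)\<^sup>2)"
proof -
  define F where "F p = f p / K" for p
  have lipF: "\<bar>F p - F q\<bar> \<le> d p q" for p q
    using lip[of p q] K unfolding F_def by (simp add: diff_divide_distrib[symmetric] abs_div pos_divide_le_eq mult.commute)
  have "{p\<in>space M. F p \<ge> m / K} = {p\<in>space M. f p \<ge> m}" "{p\<in>space M. F p \<le> m / K} = {p\<in>space M. f p \<le> m}"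
    unfolding F_def using K by (auto simp: divide_le_cancel)
  then have medF: "is_median M F (m / K)" using med unfolding is_median_def by simp
  have "measure M {p\<in>space M. \<bar>F p - m / K\<bar> \<ge> t / K} \<le> 2 * exp (- (t/K)\<^sup>2 / \<rho>\<^sup>2)"
    using sg lipF medF t K unfolding subgauss_conc_def by auto
  moreover have "{p\<in>space M. \<bar>F p - m / K\<bar> \<ge> t / K} = {p\<in>space M. \<bar>f p - m\<bar> \<ge> t}"
    unfolding F_def using K by (auto simp: diff_divide_distrib[symmetric] abs_div divide_le_cancel)
  moreover have "(t/K)\<^sup>2 / \<rho>\<^sup>2 = t\<^sup>2 / (K * \<rho>)\<^sup>2"
    by (simp add: power_divide power_mult_distrib)
  ultimately show ?thesis by simp
qed

lemma pointwise_layer: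
  assumes "s > 0" "z \<ge> (0::real)"
  shows "ennreal z \<le> (\<Sum>k. ennreal s * indicator {x::real. real k * s \<le> x} z)"
proof -
  define N where "N = nat \<lfloor>z / s\<rfloor>"
  have "z / s < real N + 1" unfolding N_def using assms by linarith
  then have "z \<le> (real N + 1) * s" using assms by (simp add: divide_less_eq)
  have "(\<Sum>k<N+1. ennreal s * indicator {x::real. real k * s \<le> x} z) = (\<Sum>k<N+1. ennreal s)"
  proof (intro sum.cong refl)
    fix k assume "k \<in> {..<N+1}"
    then have "real k \<le> real N" by simp
    also have "real N \<le> z / s" unfolding N_def using assms by simp
    finally have "real k * s \<le> z" using assms by (simp add: le_divide_eq)
    then show "ennreal s * indicator {x::real. real k * s \<le> x} z = ennreal s" by simp
  qed
  also have "\<dots> = ennreal ((real N + 1) * s)" using assms by (simp add: ennreal_of_nat_eq_real_of_nat ennreal_mult' add.commute)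
  finally have "ennreal z \<le> (\<Sum>k<N+1. ennreal s * indicator {x::real. real k * s \<le> x} z)"
    using \<open>z \<le> (real N + 1) * s\<close> by (simp add: ennreal_leI)
  also have "\<dots> \<le> (\<Sum>k. ennreal s * indicator {x::real. real k * s \<le> x} z)"
    by (intro sum_le_suminf) (auto intro: summableI)
  finally show ?thesis .
qed

lemma median_mean_zero:
  assumes P: "prob_space M" and sg: "subgauss_conc M d \<rho>" and \<rho>: "\<rho> > 0"
    and lip: "\<And>p q. \<bar>f p - f q\<bar> \<le> K * d p q" and K: "K > 0"
    and fm: "f \<in> borel_measurable M"
    and int: "integrable M f" and mean: "(\<integral>p. f p \<partial>M) = 0"
    and med: "is_median M f m"
  shows "\<bar>m\<bar> \<le> 4 * (K * \<rho>)"
proof -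
  interpret prob_space M by fact
  define s where "s = K * \<rho>"
  have s: "s > 0" unfolding s_def using K \<rho> by simp
  define Z where "Z p = \<bar>f p - m\<bar>" for p
  have Zm: "Z \<in> borel_measurable M" unfolding Z_def using fm by measurable
  have tail: "emeasure M {p\<in>space M. real k * s \<le> Z p} \<le> ennreal (2 * (1/2)^k)" for k
  proof (cases "k = 0")
    case True
    have "prob {p \<in> space M. 0 \<le> Z p} \<le> 2" using prob_le_1 by (rule order_trans) simp
    then have "ennreal (prob {p \<in> space M. 0 \<le> Z p}) \<le> ennreal 2" by (rule ennreal_leI)
    then show ?thesis using True by (simp add: emeasure_eq_measure)
  next
    case False
    have m1: "measure M {p\<in>space M. \<bar>f p - m\<bar> \<ge> real k * s} \<le> 2 * exp (- (real k * s)\<^sup>2 / (K * \<rho>)\<^sup>2)"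
      using conc_scaled[OF sg lip K med] False s by simp
    have m2: "(real k * s)\<^sup>2 / (K * \<rho>)\<^sup>2 = (real k)\<^sup>2" using K \<rho> unfolding s_def by (simp add: power_mult_distrib)
    have m3: "exp (- (real k)\<^sup>2) \<le> (1/2)^k"
    proof -
      have "real k \<le> (real k)\<^sup>2" using False by (simp add: power2_eq_square)
      then have "exp (- (real k)\<^sup>2) \<le> exp (- real k)" by simp
      also have "exp (- real k) = (exp (-1))^k" by (simp flip: exp_of_nat_mult)
      also have "\<dots> \<le> (1/2)^k"
      proof (intro power_mono)
        have "exp 1 \<ge> (2::real)" using exp_ge_add_one_self[of 1] by simp
        then show "exp (-1) \<le> (1/2::real)" by (simp add: exp_minus field_simps)
      qed simp
      finally show ?thesis .
    qed
    have "measure M {p\<in>space M. \<bar>f p - m\<bar> \<ge> real k * s} \<le> 2 * (1/2)^k"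
    proof -
      have "- (real k * s)\<^sup>2 / (K * \<rho>)\<^sup>2 = - (real k)\<^sup>2" using m2 by (simp only: minus_divide_left)
      then have "measure M {p\<in>space M. \<bar>f p - m\<bar> \<ge> real k * s} \<le> 2 * exp (- (real k)\<^sup>2)" using m1 by simp
      then show ?thesis using m3 by linarith
    qed
    then show ?thesis unfolding Z_def by (simp add: emeasure_eq_measure ennreal_leI)
  qed
  have "(\<integral>\<^sup>+p. ennreal (Z p) \<partial>M) \<le> (\<integral>\<^sup>+p. (\<Sum>k. ennreal s * indicator {p\<in>space M. real k * s \<le> Z p} p) \<partial>M)"
  proof (intro nn_integral_mono)
    fix p assume "p \<in> space M"
    then show "ennreal (Z p) \<le> (\<Sum>k. ennreal s * indicator {p\<in>space M. real k * s \<le> Z p} p)"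
      using pointwise_layer[OF s, of "Z p"] unfolding Z_def by (simp add: indicator_def)
  qed
  also have "\<dots> = (\<Sum>k. \<integral>\<^sup>+p. ennreal s * indicator {p\<in>space M. real k * s \<le> Z p} p \<partial>M)"
    using Zm by (intro nn_integral_suminf) measurable
  also have "\<dots> = (\<Sum>k. ennreal s * emeasure M {p\<in>space M. real k * s \<le> Z p})"
    using Zm by (intro suminf_cong nn_integral_cmult_indicator) measurable
  also have "\<dots> \<le> (\<Sum>k. ennreal s * ennreal (2 * (1/2)^k))"
    by (intro suminf_le mult_left_mono tail) (auto intro: summableI)
  also have "\<dots> = (\<Sum>k. ennreal (s * (2 * (1/2)^k)))"
    using s by (simp add: ennreal_mult')
  also have "\<dots> = ennreal (\<Sum>k. s * (2 * (1/2)^k))"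
    using s by (intro suminf_ennreal2) (auto intro!: summable_mult summable_geometric)
  also have "(\<Sum>k. s * (2 * (1/2::real)^k)) = 4 * s"
  proof -
    have e: "(\<lambda>k. s * (2 * (1/2::real)^k)) = (\<lambda>k. (2 * s) * (1/2::real)^k)" by (auto simp: algebra_simps)
    have "(\<Sum>k. s * (2 * (1/2::real)^k)) = (2 * s) * (\<Sum>k. (1/2::real)^k)"
      unfolding e by (rule suminf_mult) (rule summable_geometric, simp)
    also have "(\<Sum>k. (1/2::real)^k) = 2" by (subst suminf_geometric) simp_all
    finally show ?thesis by simp
  qed
  finally have nnb: "(\<integral>\<^sup>+p. ennreal (Z p) \<partial>M) \<le> ennreal (4 * s)" .
  have intZ: "integrable M Z" unfolding Z_def using int by auto
  have "ennreal (\<integral>p. Z p \<partial>M) = (\<integral>\<^sup>+p. ennreal (Z p) \<partial>M)"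
    by (rule nn_integral_eq_integral[symmetric, OF intZ]) (auto simp: Z_def)
  with nnb have "ennreal (\<integral>p. Z p \<partial>M) \<le> ennreal (4 * s)" by simp
  then have IZ: "(\<integral>p. Z p \<partial>M) \<le> 4 * s" using s by (subst (asm) ennreal_le_iff) auto
  have "(\<integral>p. (f p - m) \<partial>M) = - m" using int mean by (simp add: prob_space)
  then have "\<bar>m\<bar> = \<bar>\<integral>p. (f p - m) \<partial>M\<bar>" by simp
  also have "\<dots> \<le> (\<integral>p. Z p \<partial>M)" unfolding Z_def by (rule integral_abs_bound)
  finally show ?thesis using IZ unfolding s_def by simp
qed

section \<open>Finite-dimensional linear algebra with explicit index bounds\<close>

definition nrm :: "nat \<Rightarrow> (nat \<Rightarrow> real) \<Rightarrow> real" where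
  "nrm a u = sqrt (\<Sum>i<a. (u i)\<^sup>2)"
definition bil :: "nat \<Rightarrow> nat \<Rightarrow> (nat \<Rightarrow> nat \<Rightarrow> real) \<Rightarrow> (nat \<Rightarrow> real) \<Rightarrow> (nat \<Rightarrow> real) \<Rightarrow> real" where
  "bil a b A u v = (\<Sum>i<a. \<Sum>k<b. u i * A i k * v k)"
definition hsn :: "nat \<Rightarrow> nat \<Rightarrow> (nat \<Rightarrow> nat \<Rightarrow> real) \<Rightarrow> real" where
  "hsn a b A = sqrt (\<Sum>i<a. \<Sum>j<b. (A i j)\<^sup>2)"
definition mm :: "nat \<Rightarrow> (nat \<Rightarrow> nat \<Rightarrow> real) \<Rightarrow> (nat \<Rightarrow> nat \<Rightarrow> real) \<Rightarrow> nat \<Rightarrow> nat \<Rightarrow> real" where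
  "mm b A Z = (\<lambda>i j. \<Sum>k<b. A i k * Z k j)"
definition opb :: "nat \<Rightarrow> nat \<Rightarrow> (nat \<Rightarrow> nat \<Rightarrow> real) \<Rightarrow> real \<Rightarrow> bool" where
  "opb a b A R \<longleftrightarrow> (\<forall>u v. bil a b A u v \<le> R * nrm a u * nrm b v)"

lemma nrm_L2: "nrm a u = L2_set u {..<a}"
  unfolding nrm_def L2_set_def by simp

lemma nrm_nonneg: "nrm a u \<ge> 0" unfolding nrm_def by (simp add: sum_nonneg)
lemma hsn_nonneg: "hsn a b A \<ge> 0" unfolding hsn_def by (simp add: sum_nonneg)

lemma nrm_sq: "(nrm a u)\<^sup>2 = (\<Sum>i<a. (u i)\<^sup>2)"
  unfolding nrm_def by (simp add: sum_nonneg)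
lemma hsn_sq: "(hsn a b A)\<^sup>2 = (\<Sum>i<a. \<Sum>j<b. (A i j)\<^sup>2)"
  unfolding hsn_def by (simp add: sum_nonneg)

lemma nrm_triangle: "nrm a (\<lambda>i. u i + w i) \<le> nrm a u + nrm a w"
  unfolding nrm_L2 by (rule L2_set_triangle_ineq)

lemma cs_sum: "\<bar>\<Sum>i<a. u i * w i\<bar> \<le> nrm a u * nrm a w"
proof -
  have "\<bar>\<Sum>i<a. u i * w i\<bar> \<le> (\<Sum>i<a. \<bar>u i\<bar> * \<bar>w i\<bar>)"
    by (rule order_trans[OF sum_abs]) (simp add: abs_mult)
  also have "\<dots> \<le> nrm a u * nrm a w" unfolding nrm_L2 by (rule L2_set_mult_ineq)
  finally show ?thesis .
qed

lemma sq_le_from_cs: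
  fixes x R c :: real
  assumes "x\<^sup>2 \<le> R * x * c" "x \<ge> 0" "R \<ge> 0" "c \<ge> 0"
  shows "x \<le> R * c"
proof (cases "x = 0")
  case True then show ?thesis using assms by simp
next
  case False
  then have "x > 0" using assms by simp
  then have "x * x \<le> (R * c) * x" using assms by (simp add: power2_eq_square algebra_simps)
  then show ?thesis using \<open>x > 0\<close> by simp
qed

lemma bil_row: "bil a b A u v = (\<Sum>i<a. u i * (\<Sum>k<b. A i k * v k))"
  unfolding bil_def by (simp add: sum_distrib_left mult.assoc)

lemma bil_col: "bil a b A u v = (\<Sum>k<b. (\<Sum>i<a. u i * A i k) * v k)"
  unfolding bil_def by (subst sum.swap) (simp add: sum_distrib_right)

lemma bil_hs: "\<bar>bil a b A u v\<bar> \<le> nrm a u * nrm b v * hsn a b A"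
proof -
  define r where "r i = sqrt (\<Sum>k<b. (A i k)\<^sup>2)" for i
  have r: "\<bar>\<Sum>k<b. A i k * v k\<bar> \<le> r i * nrm b v" for i
    using cs_sum[where a=b and u="A i" and w=v] unfolding r_def nrm_def by simp
  have "\<bar>bil a b A u v\<bar> \<le> (\<Sum>i<a. \<bar>u i\<bar> * \<bar>\<Sum>k<b. A i k * v k\<bar>)"
    unfolding bil_row by (rule order_trans[OF sum_abs]) (simp add: abs_mult)
  also have "\<dots> \<le> (\<Sum>i<a. \<bar>u i\<bar> * (r i * nrm b v))"
    by (intro sum_mono mult_left_mono r) simp
  also have "\<dots> = (\<Sum>i<a. \<bar>u i\<bar> * \<bar>r i\<bar>) * nrm b v"
    by (simp add: sum_distrib_right r_def mult.assoc sum_nonneg)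
  also have "\<dots> \<le> (nrm a u * nrm a r) * nrm b v"
    by (intro mult_right_mono) (simp_all add: nrm_L2 L2_set_mult_ineq nrm_nonneg)
  also have "nrm a r = hsn a b A"
    unfolding nrm_def hsn_def r_def by (simp add: sum_nonneg)
  finally show ?thesis by (simp add: mult_ac)
qed

lemma bil_diff1: "bil a b A (\<lambda>i. u i - w i) v = bil a b A u v - bil a b A w v"
  unfolding bil_def by (simp add: algebra_simps sum_subtractf)
lemma bil_diff2: "bil a b A u (\<lambda>k. v k - w k) = bil a b A u v - bil a b A u w"
  unfolding bil_def by (simp add: algebra_simps sum_subtractf)
lemma bil_scale1: "bil a b A (\<lambda>i. c * u i) v = c * bil a b A u v"
  unfolding bil_def by (simp add: sum_distrib_left mult_ac)
lemma bil_scale2: "bil a b A u (\<lambda>k. c * v k) = c * bil a b A u v"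
  unfolding bil_def by (simp add: sum_distrib_left mult_ac)
lemma nrm_scale: "nrm a (\<lambda>i. c * u i) = \<bar>c\<bar> * nrm a u"
  unfolding nrm_def by (simp add: power_mult_distrib sum_distrib_left[symmetric] real_sqrt_mult)
lemma nrm_zero_bil1: "nrm a u = 0 \<Longrightarrow> bil a b A u v = 0"
  unfolding nrm_def bil_def by (simp add: sum_nonneg_eq_0_iff)
lemma nrm_zero_bil2: "nrm b v = 0 \<Longrightarrow> bil a b A u v = 0"
  unfolding nrm_def bil_def by (simp add: sum_nonneg_eq_0_iff)

lemma hsn_mm: "hsn a n (mm b A Z) \<le> hsn a b A * hsn b n Z"
proof -
  define r where "r i = sqrt (\<Sum>k<b. (A i k)\<^sup>2)" for i
  define c where "c j = sqrt (\<Sum>k<b. (Z k j)\<^sup>2)" for j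
  have e: "(mm b A Z i j)\<^sup>2 \<le> (r i)\<^sup>2 * (c j)\<^sup>2" for i j
  proof -
    have "\<bar>mm b A Z i j\<bar> \<le> r i * c j"
      using cs_sum[where a=b and u="A i" and w="\<lambda>k. Z k j"] unfolding mm_def r_def c_def nrm_def by simp
    then have "\<bar>mm b A Z i j\<bar>\<^sup>2 \<le> (r i * c j)\<^sup>2" by (rule power_mono) simp
    then show ?thesis by (simp add: power_mult_distrib)
  qed
  have "(\<Sum>i<a. \<Sum>j<n. (mm b A Z i j)\<^sup>2) \<le> (\<Sum>i<a. \<Sum>j<n. (r i)\<^sup>2 * (c j)\<^sup>2)"
    by (intro sum_mono e)
  also have "\<dots> = (\<Sum>i<a. (r i)\<^sup>2) * (\<Sum>j<n. (c j)\<^sup>2)"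
    by (simp add: sum_distrib_left sum_distrib_right) (rule sum.swap)
  also have "(\<Sum>i<a. (r i)\<^sup>2) = (hsn a b A)\<^sup>2" unfolding hsn_sq r_def by (simp add: sum_nonneg)
  also have "(\<Sum>j<n. (c j)\<^sup>2) = (hsn b n Z)\<^sup>2" unfolding hsn_sq c_def by (simp add: sum_nonneg) (rule sum.swap)
  finally have "(hsn a n (mm b A Z))\<^sup>2 \<le> (hsn a b A * hsn b n Z)\<^sup>2"
    unfolding hsn_sq[of a n] by (simp add: power_mult_distrib)
  then show ?thesis by (rule power2_le_imp_le) (simp add: hsn_nonneg)
qed

lemma opb_left:
  assumes "opb a b A R" "R \<ge> 0"
  shows "hsn a n (mm b A Z) \<le> R * hsn b n Z"
proof -
  define y where "y j = (\<lambda>i. mm b A Z i j)" for j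
  define z where "z j = (\<lambda>k. Z k j)" for j
  have col: "nrm a (y j) \<le> R * nrm b (z j)" for j
  proof (rule sq_le_from_cs[OF _ nrm_nonneg assms(2) nrm_nonneg])
    have "(nrm a (y j))\<^sup>2 = bil a b A (y j) (z j)"
      unfolding nrm_sq bil_row y_def z_def by (simp add: mm_def power2_eq_square)
    also have "\<dots> \<le> R * nrm a (y j) * nrm b (z j)" using assms(1) unfolding opb_def by blast
    finally show "(nrm a (y j))\<^sup>2 \<le> R * nrm a (y j) * nrm b (z j)" .
  qed
  have "(\<Sum>j<n. (nrm a (y j))\<^sup>2) \<le> (\<Sum>j<n. (R * nrm b (z j))\<^sup>2)"
    by (intro sum_mono power_mono col nrm_nonneg)
  also have "\<dots> = R\<^sup>2 * (hsn b n Z)\<^sup>2"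
    unfolding hsn_sq by (simp add: power_mult_distrib nrm_sq z_def sum_distrib_left) (subst sum.swap, simp)
  finally have "(hsn a n (mm b A Z))\<^sup>2 \<le> (R * hsn b n Z)\<^sup>2"
    unfolding hsn_sq[of a n] nrm_sq y_def by (subst sum.swap) (simp add: power_mult_distrib)
  then show ?thesis by (rule power2_le_imp_le) (simp add: hsn_nonneg assms)
qed

lemma opb_right:
  assumes "opb b n X R" "R \<ge> 0"
  shows "hsn a n (mm b W X) \<le> R * hsn a b W"
proof -
  define v where "v i = (\<lambda>j. mm b W X i j)" for i
  define w where "w i = (\<lambda>k. W i k)" for i
  have row: "nrm n (v i) \<le> R * nrm b (w i)" for i
  proof (rule sq_le_from_cs[OF _ nrm_nonneg assms(2) nrm_nonneg])
    have "(nrm n (v i))\<^sup>2 = bil b n X (w i) (v i)"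
      unfolding nrm_sq bil_col v_def w_def by (simp add: mm_def power2_eq_square)
    also have "\<dots> \<le> R * nrm b (w i) * nrm n (v i)" using assms(1) unfolding opb_def by blast
    finally show "(nrm n (v i))\<^sup>2 \<le> R * nrm n (v i) * nrm b (w i)" by (simp add: mult_ac)
  qed
  have "(\<Sum>i<a. (nrm n (v i))\<^sup>2) \<le> (\<Sum>i<a. (R * nrm b (w i))\<^sup>2)"
    by (intro sum_mono power_mono row nrm_nonneg)
  also have "\<dots> = R\<^sup>2 * (hsn a b W)\<^sup>2"
    unfolding hsn_sq by (simp add: power_mult_distrib nrm_sq w_def sum_distrib_left)
  finally have "(hsn a n (mm b W X))\<^sup>2 \<le> (R * hsn a b W)\<^sup>2"
    unfolding hsn_sq[of a n] nrm_sq v_def by (simp add: power_mult_distrib)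
  then show ?thesis by (rule power2_le_imp_le) (simp add: hsn_nonneg assms)
qed

lemma geo_sym_sum: "(\<Sum>k\<in>{-int m..int m}. (1/2::real)^(nat \<bar>k\<bar>)) = 3 - 2 * (1/2)^m"
proof (induction m)
  case 0 then show ?case by simp
next
  case (Suc m)
  have n: "nat (int m + 1) = Suc m" "nat (1 + int m) = Suc m" by auto
  have e: "{-int (Suc m)..int (Suc m)} = insert (-int (Suc m)) (insert (int (Suc m)) {-int m..int m})" by auto
  have "(\<Sum>k\<in>{-int (Suc m)..int (Suc m)}. (1/2::real)^(nat \<bar>k\<bar>))
        = (1/2)^(Suc m) + ((1/2)^(Suc m) + (\<Sum>k\<in>{-int m..int m}. (1/2::real)^(nat \<bar>k\<bar>)))"
    unfolding e using n by (subst sum.insert; simp)+ 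
  also have "\<dots> = 3 - 2 * (1/2)^(Suc m)" proof -
    have "nat (int m + 1) = Suc m" "nat (1 + int m) = Suc m" by auto
    then show ?thesis using Suc by simp
  qed
  finally show ?case .
qed

definition Cnt :: "nat \<Rightarrow> nat \<Rightarrow> (nat \<Rightarrow> int) set" where
  "Cnt a m = {z. (\<forall>i\<ge>a. z i = 0) \<and> (\<Sum>i<a. \<bar>z i\<bar>) \<le> int m}"

lemma Cnt_card:
  shows "finite (Cnt a m) \<and> real (card (Cnt a m)) \<le> 3^a * 2^m"
proof -
  define Box where "Box = PiE {..<a} (\<lambda>_. {-int m..int m})"
  have fB: "finite Box" unfolding Box_def by (intro finite_PiE) auto
  have zi: "\<bar>z i\<bar> \<le> int m" if "z \<in> Cnt a m" "i < a" for z i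
  proof -
    have "\<bar>z i\<bar> \<le> (\<Sum>i<a. \<bar>z i\<bar>)" using that by (intro member_le_sum) auto
    then show ?thesis using that unfolding Cnt_def by auto
  qed
  have sub: "(\<lambda>z. restrict z {..<a}) ` Cnt a m \<subseteq> Box"
    unfolding Box_def
  proof
    fix g assume "g \<in> (\<lambda>z. restrict z {..<a}) ` Cnt a m"
    then obtain z where z: "z \<in> Cnt a m" "g = restrict z {..<a}" by auto
    show "g \<in> {..<a} \<rightarrow>\<^sub>E {- int m..int m}"
    proof -
      have "-int m \<le> z i \<and> z i \<le> int m" if "i < a" for i
      proof -
        have "\<bar>z i\<bar> \<le> int m" using zi[OF z(1) that] .
        then show ?thesis by arith
      qed
      then show ?thesis unfolding z(2) PiE_iff by auto
    qed
  qed
  have inj: "inj_on (\<lambda>z. restrict z {..<a}) (Cnt a m)"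
  proof (rule inj_onI)
    fix z w assume zw: "z \<in> Cnt a m" "w \<in> Cnt a m" and eq: "restrict z {..<a} = restrict w {..<a}"
    show "z = w"
    proof (rule ext)
      fix i show "z i = w i"
      proof (cases "i < a")
        case True then show ?thesis using fun_cong[OF eq, of i] by simp
      next
        case False then show ?thesis using zw unfolding Cnt_def by auto
      qed
    qed
  qed
  have fin': "finite ((\<lambda>z. restrict z {..<a}) ` Cnt a m)" using sub fB by (rule finite_subset)
  then have fin: "finite (Cnt a m)" using inj finite_image_iff by blast
  let ?w = "\<lambda>g. (\<Prod>i<a. (1/2::real)^(nat \<bar>g i\<bar>))"
  have "real (card (Cnt a m)) = real (card ((\<lambda>z. restrict z {..<a}) ` Cnt a m))"
    using card_image[OF inj] by simp
  also have "\<dots> = (\<Sum>g\<in>(\<lambda>z. restrict z {..<a}) ` Cnt a m. 1)" by simp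
  also have "\<dots> \<le> (\<Sum>g\<in>(\<lambda>z. restrict z {..<a}) ` Cnt a m. 2^m * ?w g)"
  proof (intro sum_mono)
    fix g assume "g \<in> (\<lambda>z. restrict z {..<a}) ` Cnt a m"
    then obtain z where z: "z \<in> Cnt a m" "g = restrict z {..<a}" by auto
    have "?w g = (1/2)^(\<Sum>i<a. nat \<bar>g i\<bar>)" by (simp add: power_sum)
    also have "(\<Sum>i<a. nat \<bar>g i\<bar>) \<le> m"
    proof -
      have e: "int (\<Sum>i<a. nat \<bar>g i\<bar>) = (\<Sum>i<a. \<bar>z i\<bar>)" using z by (simp add: int_sum)
      have "(\<Sum>i<a. \<bar>z i\<bar>) \<le> int m" using z(1) unfolding Cnt_def by simp
      then have "int (\<Sum>i<a. nat \<bar>g i\<bar>) \<le> int m" by (simp only: e)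
      then show ?thesis by (simp only: of_nat_le_iff)
    qed
    then have "(1/2::real)^(\<Sum>i<a. nat \<bar>g i\<bar>) \<ge> (1/2)^m" by (intro power_decreasing) auto
    finally have "?w g \<ge> (1/2)^m" .
    then have "2^m * ?w g \<ge> 2^m * (1/2)^m" by simp
    then show "1 \<le> 2^m * ?w g" by (simp add: power_one_over)
  qed
  also have "\<dots> \<le> (\<Sum>g\<in>Box. 2^m * ?w g)"
    by (intro sum_mono2[OF fB sub] mult_nonneg_nonneg prod_nonneg) auto
  also have "\<dots> = 2^m * (\<Sum>g\<in>Box. ?w g)" by (simp add: sum_distrib_left)
  also have "(\<Sum>g\<in>Box. ?w g) = (\<Prod>i<a. \<Sum>k\<in>{-int m..int m}. (1/2::real)^(nat \<bar>k\<bar>))"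
    unfolding Box_def by (subst prod_sum_PiE) auto
  also have "\<dots> \<le> (\<Prod>i<a. 3)"
  proof (intro prod_mono conjI)
    have "(1/2::real)^m \<le> 1" by (rule power_le_one) auto
    then show "(\<Sum>k\<in>{-int m..int m}. (1/2::real)^(nat \<bar>k\<bar>)) \<le> 3" for i by (simp add: geo_sym_sum)
  qed (auto intro!: sum_nonneg)
  finally show ?thesis using fin by (simp add: mult.commute)
qed

section \<open>Nets\<close>

lemma sum_abs_le_sqrt: "(\<Sum>i<a. \<bar>u i\<bar>) \<le> sqrt (real a) * nrm a u"
proof -
  have "(\<Sum>i<a. \<bar>u i\<bar>) = \<bar>\<Sum>i<a. (\<lambda>_. 1) i * \<bar>u i\<bar>\<bar>" by (simp add: sum_nonneg)
  also have "\<dots> \<le> nrm a (\<lambda>_. 1) * nrm a (\<lambda>i. \<bar>u i\<bar>)" by (rule cs_sum)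
  also have "nrm a (\<lambda>_. 1) = sqrt (real a)" unfolding nrm_def by simp
  also have "nrm a (\<lambda>i. \<bar>u i\<bar>) = nrm a u" unfolding nrm_def by simp
  finally show ?thesis .
qed

lemma net_exists:
  assumes a: "a > 0"
  shows "\<exists>N. finite N \<and> real (card N) \<le> 96^a \<and> (\<forall>w\<in>N. nrm a w \<le> 5/4) \<and>
             (\<forall>u. nrm a u \<le> 1 \<longrightarrow> (\<exists>w\<in>N. nrm a (\<lambda>i. u i - w i) \<le> 1/4))"
proof -
  define \<delta> where "\<delta> = 1 / (4 * sqrt (real a))"
  have \<delta>: "\<delta> > 0" unfolding \<delta>_def using a by simp
  define zz where "zz u = (\<lambda>i. if i < a then \<lfloor>u i / \<delta>\<rfloor> else 0)" for u :: "nat \<Rightarrow> real"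
  define emb where "emb z = (\<lambda>i. \<delta> * real_of_int (z i))" for z :: "nat \<Rightarrow> int"
  define U where "U = {u. nrm a u \<le> 1}"
  define N where "N = emb ` zz ` U"
  have approx: "nrm a (\<lambda>i. u i - emb (zz u) i) \<le> 1/4" for u
  proof -
    have "(\<Sum>i<a. (u i - emb (zz u) i)\<^sup>2) \<le> (\<Sum>i<a. \<delta>\<^sup>2)"
    proof (intro sum_mono)
      fix i assume "i \<in> {..<a}"
      then have e: "emb (zz u) i = \<delta> * real_of_int \<lfloor>u i / \<delta>\<rfloor>" unfolding emb_def zz_def by simp
      have "real_of_int \<lfloor>u i / \<delta>\<rfloor> \<le> u i / \<delta>" "u i / \<delta> < real_of_int \<lfloor>u i / \<delta>\<rfloor> + 1" by linarith+
      then have "real_of_int \<lfloor>u i / \<delta>\<rfloor> * \<delta> \<le> (u i / \<delta>) * \<delta>" "(u i / \<delta>) * \<delta> < (real_of_int \<lfloor>u i / \<delta>\<rfloor> + 1) * \<delta>"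
        using \<delta> by (intro mult_right_mono mult_strict_right_mono; simp)+
      then have "\<delta> * real_of_int \<lfloor>u i / \<delta>\<rfloor> \<le> u i" "u i < \<delta> * real_of_int \<lfloor>u i / \<delta>\<rfloor> + \<delta>"
        using \<delta> by (simp_all add: algebra_simps)
      then have "0 \<le> u i - emb (zz u) i" "u i - emb (zz u) i \<le> \<delta>" unfolding e by linarith+
      then show "(u i - emb (zz u) i)\<^sup>2 \<le> \<delta>\<^sup>2" by (intro power_mono) auto
    qed
    also have "\<dots> = (1/4)\<^sup>2" unfolding \<delta>_def using a by (simp add: power_divide power_mult_distrib)
    finally have "sqrt (\<Sum>i<a. (u i - emb (zz u) i)\<^sup>2) \<le> sqrt ((1/4)\<^sup>2)" by (rule real_sqrt_le_mono)
    then show ?thesis unfolding nrm_def by simp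
  qed
  have small: "nrm a (emb (zz u)) \<le> 5/4" if "u \<in> U" for u
  proof -
    have "nrm a (emb (zz u)) = nrm a (\<lambda>i. u i + (- (u i - emb (zz u) i)))" by simp
    also have "\<dots> \<le> nrm a u + nrm a (\<lambda>i. - (u i - emb (zz u) i))" by (rule nrm_triangle)
    also have "nrm a (\<lambda>i. - (u i - emb (zz u) i)) = nrm a (\<lambda>i. u i - emb (zz u) i)" unfolding nrm_def by (simp add: power2_commute)
    finally show ?thesis using approx[of u] that unfolding U_def by simp
  qed
  have zzC: "zz ` U \<subseteq> Cnt a (5 * a)"
  proof
    fix z assume "z \<in> zz ` U"
    then obtain u where u: "u \<in> U" "z = zz u" by auto
    have "(\<Sum>i<a. \<bar>z i\<bar>) \<le> int (5 * a)"
    proof -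
      have "real_of_int (\<Sum>i<a. \<bar>z i\<bar>) = (\<Sum>i<a. real_of_int \<bar>\<lfloor>u i / \<delta>\<rfloor>\<bar>)" unfolding u zz_def by simp
      also have "\<dots> \<le> (\<Sum>i<a. \<bar>u i\<bar> / \<delta> + 1)"
      proof (intro sum_mono)
        fix i
        have "real_of_int \<lfloor>u i / \<delta>\<rfloor> \<le> u i / \<delta>" "u i / \<delta> < real_of_int \<lfloor>u i / \<delta>\<rfloor> + 1" by linarith+
        moreover have "\<bar>u i / \<delta>\<bar> = \<bar>u i\<bar> / \<delta>" using \<delta> by simp
        ultimately show "real_of_int \<bar>\<lfloor>u i / \<delta>\<rfloor>\<bar> \<le> \<bar>u i\<bar> / \<delta> + 1" by linarith
      qed
      also have "\<dots> = (\<Sum>i<a. \<bar>u i\<bar>) / \<delta> + a" by (simp add: sum.distrib sum_divide_distrib)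
      also have "\<dots> \<le> (sqrt (real a) * 1) / \<delta> + a"
      proof -
        have "(\<Sum>i<a. \<bar>u i\<bar>) \<le> sqrt (real a) * 1"
        proof -
          have "nrm a u \<le> 1" using u(1) unfolding U_def by simp
          then have "sqrt (real a) * nrm a u \<le> sqrt (real a) * 1" by (intro mult_left_mono) auto
          then show ?thesis using sum_abs_le_sqrt[where a=a and u=u] by linarith
        qed
        then show ?thesis using \<delta> by (simp add: divide_right_mono)
      qed
      also have "\<dots> = 5 * real a" unfolding \<delta>_def using a by (simp add: field_simps)
      finally show ?thesis by linarith
    qed
    moreover have "\<forall>i\<ge>a. z i = 0" unfolding u zz_def by simp
    ultimately show "z \<in> Cnt a (5 * a)" unfolding Cnt_def by simp
  qed
  have CC: "finite (Cnt a (5 * a))" "real (card (Cnt a (5 * a))) \<le> 3^a * 2^(5*a)" using Cnt_card by auto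
  have fz: "finite (zz ` U)" using zzC CC(1) by (rule finite_subset)
  have "finite N" unfolding N_def using fz by simp
  moreover have "real (card N) \<le> 96^a"
  proof -
    have "card N \<le> card (zz ` U)" unfolding N_def using fz by (rule card_image_le)
    also have "\<dots> \<le> card (Cnt a (5 * a))" using zzC CC(1) by (rule card_mono[rotated])
    finally have "real (card N) \<le> 3^a * 2^(5*a)" using CC(2) by linarith
    also have "(3::real)^a * 2^(5*a) = 96^a" by (simp add: power_mult power_mult_distrib[symmetric])
    finally show ?thesis .
  qed
  moreover have "\<forall>w\<in>N. nrm a w \<le> 5/4" unfolding N_def using small by auto
  moreover have "\<forall>u. nrm a u \<le> 1 \<longrightarrow> (\<exists>w\<in>N. nrm a (\<lambda>i. u i - w i) \<le> 1/4)"
    unfolding N_def U_def using approx by blast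
  ultimately show ?thesis by blast
qed

section \<open>From nets to operator bounds\<close>

lemma net_opb:
  assumes Na: "\<forall>u. nrm a u \<le> 1 \<longrightarrow> (\<exists>w\<in>Na. nrm a (\<lambda>i. u i - w i) \<le> 1/4)" "\<forall>w\<in>Na. nrm a w \<le> 5/4"
    and Nb: "\<forall>v. nrm b v \<le> 1 \<longrightarrow> (\<exists>w\<in>Nb. nrm b (\<lambda>i. v i - w i) \<le> 1/4)"
    and T: "\<forall>u\<in>Na. \<forall>v\<in>Nb. bil a b A u v \<le> T"
  shows "opb a b A (3 * T) \<and> T \<ge> 0"
proof -
  define S where "S = {bil a b A u v | u v. nrm a u \<le> 1 \<and> nrm b v \<le> 1}"
  have S0: "0 \<in> S" unfolding S_def by (rule CollectI, rule exI[of _ "\<lambda>_. 0"], rule exI[of _ "\<lambda>_. 0"]) (simp add: nrm_def bil_def)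
  have Sbdd: "bdd_above S"
  proof (rule bdd_aboveI)
    fix x assume "x \<in> S"
    then obtain u v where x: "x = bil a b A u v" "nrm a u \<le> 1" "nrm b v \<le> 1" unfolding S_def by auto
    have "x \<le> nrm a u * nrm b v * hsn a b A" using bil_hs[of a b A u v] x(1) by simp
    also have "\<dots> \<le> 1 * 1 * hsn a b A"
      using x by (intro mult_right_mono mult_mono hsn_nonneg nrm_nonneg) auto
    finally show "x \<le> hsn a b A" by simp
  qed
  define Ms where "Ms = Sup S"
  have Ms0: "Ms \<ge> 0" unfolding Ms_def using S0 Sbdd by (rule cSup_upper)
  have ball: "bil a b A u v \<le> Ms" if "nrm a u \<le> 1" "nrm b v \<le> 1" for u v
    unfolding Ms_def using that Sbdd by (intro cSup_upper) (auto simp: S_def)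
  have gen: "bil a b A u v \<le> Ms * nrm a u * nrm b v" for u v
  proof (cases "nrm a u = 0 \<or> nrm b v = 0")
    case True then show ?thesis using nrm_zero_bil1 nrm_zero_bil2 by auto
  next
    case False
    then have pu: "nrm a u > 0" and pv: "nrm b v > 0" using nrm_nonneg[of a u] nrm_nonneg[of b v] by auto
    define u' where "u' = (\<lambda>i. (1 / nrm a u) * u i)"
    define v' where "v' = (\<lambda>i. (1 / nrm b v) * v i)"
    have "nrm a u' = 1" unfolding u'_def by (subst nrm_scale) (use pu in simp)
    moreover have "nrm b v' = 1" unfolding v'_def by (subst nrm_scale) (use pv in simp)
    ultimately have "bil a b A u' v' \<le> Ms" by (intro ball) auto
    moreover have "bil a b A u' v' = bil a b A u v / (nrm a u * nrm b v)"
      unfolding u'_def v'_def by (simp only: bil_scale1 bil_scale2) simp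
    ultimately show ?thesis using pu pv by (simp add: divide_le_eq mult_ac)
  qed
  have key: "bil a b A u v \<le> T + 9/16 * Ms" if u1: "nrm a u \<le> 1" and v1: "nrm b v \<le> 1" for u v
  proof -
    obtain u0 where u0: "u0 \<in> Na" "nrm a (\<lambda>i. u i - u0 i) \<le> 1/4" using Na(1) u1 by blast
    obtain v0 where v0: "v0 \<in> Nb" "nrm b (\<lambda>i. v i - v0 i) \<le> 1/4" using Nb v1 by blast
    have dec: "bil a b A u v = bil a b A u0 v0 + bil a b A (\<lambda>i. u i - u0 i) v + bil a b A u0 (\<lambda>i. v i - v0 i)"
      by (simp add: bil_diff1 bil_diff2)
    have "bil a b A (\<lambda>i. u i - u0 i) v \<le> Ms * nrm a (\<lambda>i. u i - u0 i) * nrm b v" by (rule gen)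
    also have "\<dots> \<le> Ms * (1/4) * 1" using u0 v1 Ms0 by (intro mult_mono mult_left_mono nrm_nonneg) auto
    finally have t1: "bil a b A (\<lambda>i. u i - u0 i) v \<le> Ms / 4" by simp
    have "bil a b A u0 (\<lambda>i. v i - v0 i) \<le> Ms * nrm a u0 * nrm b (\<lambda>i. v i - v0 i)" by (rule gen)
    also have "\<dots> \<le> Ms * (5/4) * (1/4)" using v0 u0 Na(2) Ms0 by (intro mult_mono mult_left_mono nrm_nonneg) auto
    finally have t2: "bil a b A u0 (\<lambda>i. v i - v0 i) \<le> Ms * (5/16)" by simp
    have t0: "bil a b A u0 v0 \<le> T" using T u0 v0 by blast
    show ?thesis using dec t0 t1 t2 by simp
  qed
  have "Ms \<le> T + 9/16 * Ms" unfolding Ms_def[symmetric]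
    using S0 key by (subst Ms_def, intro cSup_least) (auto simp: S_def Ms_def)
  then have MsT: "Ms \<le> 16/7 * T" by simp
  then have T0: "T \<ge> 0" using Ms0 by simp
  have "opb a b A (3 * T)" unfolding opb_def
  proof (intro allI)
    fix u v
    have "bil a b A u v \<le> Ms * nrm a u * nrm b v" by (rule gen)
    also have "\<dots> \<le> (3 * T) * nrm a u * nrm b v"
      using MsT T0 by (intro mult_right_mono nrm_nonneg) auto
    finally show "bil a b A u v \<le> 3 * T * nrm a u * nrm b v" .
  qed
  then show ?thesis using T0 by simp
qed

section \<open>High-probability operator bound for a random block\<close>

lemma opb_mono: "opb a b A R \<Longrightarrow> R \<le> R' \<Longrightarrow> opb a b A R'"
  unfolding opb_def by (meson mult_right_mono nrm_nonneg order_trans)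

lemma bil_minus: "bil a b (\<lambda>i k. A i k - B i k) u v = bil a b A u v - bil a b B u v"
  unfolding bil_def by (simp add: algebra_simps sum_subtractf)

lemma hsn_hs_dist: "hsn a b (\<lambda>i k. A i k - B i k) = hs_dist a b A B"
  unfolding hsn_def hs_dist_def by simp

lemma sqrt3_le: "x \<ge> 0 \<Longrightarrow> y \<ge> 0 \<Longrightarrow> z \<ge> 0 \<Longrightarrow> sqrt (x + y + z) \<le> sqrt x + sqrt y + sqrt z"
  by (smt (verit, best) real_sqrt_ge_zero real_sqrt_le_mono real_sqrt_sum_squares_triangle_ineq real_sqrt_pow2 power2_eq_square sqrt_add_le_add_sqrt)

lemma ln96: "ln (96::real) \<le> 9"
proof -
  have e1: "exp (1::real) \<ge> 2" using exp_ge_add_one_self[of 1] by simp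
  have "(2::real)^9 \<le> (exp 1)^9" by (rule power_mono[OF e1]) simp
  also have "(exp (1::real))^9 = exp 9" using exp_of_nat_mult[of 9 "1::real"] by simp
  finally have "(96::real) \<le> exp 9" by simp
  then have "ln (96::real) \<le> ln (exp 9)" by (subst ln_le_cancel_iff) auto
  then show ?thesis by simp
qed

lemma block_opb_event:
  fixes M :: "params measure" and Ablk :: "params \<Rightarrow> nat \<Rightarrow> nat \<Rightarrow> real"
  assumes P: "prob_space M" and sM: "sets M = sets borel"
    and sg: "subgauss_conc M (param_dist L n dims) \<rho>" and \<rho>: "\<rho> > 0"
    and lipA: "\<And>p q. hs_dist a b (Ablk p) (Ablk q) \<le> param_dist L n dims p q"
    and cen: "\<And>i k. i < a \<Longrightarrow> k < b \<Longrightarrow> integrable M (\<lambda>p. Ablk p i k) \<and> (\<integral>p. Ablk p i k \<partial>M) = 0"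
    and a: "a > 0" and b: "b > 0" and s: "s \<ge> 0"
  shows "\<exists>G\<in>sets M. (\<forall>p\<in>G. opb a b (Ablk p) (\<rho> * (24 + 18 * (sqrt a + sqrt b) + 6 * s)))
             \<and> measure M (space M - G) \<le> 2 * exp (- s\<^sup>2)"
proof -
  interpret prob_space M by fact
  have spM: "space M = UNIV" using sM by (rule space_borel_M)
  obtain Na where Na: "finite Na" "real (card Na) \<le> 96^a" "\<forall>w\<in>Na. nrm a w \<le> 5/4"
     "\<forall>u. nrm a u \<le> 1 \<longrightarrow> (\<exists>w\<in>Na. nrm a (\<lambda>i. u i - w i) \<le> 1/4)"
    using net_exists[OF a] by blast
  obtain Nb where Nb: "finite Nb" "real (card Nb) \<le> 96^b" "\<forall>w\<in>Nb. nrm b w \<le> 5/4"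
     "\<forall>u. nrm b u \<le> 1 \<longrightarrow> (\<exists>w\<in>Nb. nrm b (\<lambda>i. u i - w i) \<le> 1/4)"
    using net_exists[OF b] by blast
  define \<Lambda> where "\<Lambda> = ln (96::real)"
  have \<Lambda>0: "\<Lambda> \<ge> 0" unfolding \<Lambda>_def by simp
  define T where "T = 8 * \<rho> + 2 * \<rho> * sqrt (\<Lambda> * (a + b) + s\<^sup>2)"
  define Y where "Y u v p = bil a b (Ablk p) u v" for u v p
  have lipY: "\<bar>Y u v p - Y u v q\<bar> \<le> 2 * param_dist L n dims p q" if "u \<in> Na" "v \<in> Nb" for u v p q
  proof -
    have "\<bar>Y u v p - Y u v q\<bar> = \<bar>bil a b (\<lambda>i k. Ablk p i k - Ablk q i k) u v\<bar>"
      unfolding Y_def bil_minus by simp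
    also have "\<dots> \<le> nrm a u * nrm b v * hs_dist a b (Ablk p) (Ablk q)"
      using bil_hs[of a b _ u v] hsn_hs_dist by metis
    also have "\<dots> \<le> (5/4) * (5/4) * param_dist L n dims p q"
      using Na(3) Nb(3) that lipA[of p q]
      by (intro mult_mono) (auto simp: nrm_nonneg hs_dist_nonneg)
    also have "\<dots> \<le> 2 * param_dist L n dims p q" using param_dist_nonneg[of L n dims p q] by simp
    finally show ?thesis .
  qed
  have Ym: "Y u v \<in> borel_measurable M" if "u \<in> Na" "v \<in> Nb" for u v
    using lipschitz_measurable[OF lipY[OF that] sM] .
  have tail: "measure M {p\<in>space M. Y u v p > T} \<le> 2 * exp (- (\<Lambda> * (a + b) + s\<^sup>2))" if uv: "u \<in> Na" "v \<in> Nb" for u v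
  proof -
    have Yeq: "Y u v = (\<lambda>p. \<Sum>i<a. \<Sum>k<b. (u i * v k) * Ablk p i k)"
      by (auto simp: Y_def bil_def mult_ac)
    have intY: "integrable M (Y u v)" unfolding Yeq
      by (intro Bochner_Integration.integrable_sum Bochner_Integration.integrable_mult_left) (use cen in auto)
    have "(\<integral>p. (\<Sum>i<a. \<Sum>k<b. (u i * v k) * Ablk p i k) \<partial>M) = (\<Sum>i<a. \<integral>p. (\<Sum>k<b. (u i * v k) * Ablk p i k) \<partial>M)"
      by (intro Bochner_Integration.integral_sum Bochner_Integration.integrable_sum Bochner_Integration.integrable_mult_left) (use cen in auto)
    also have "\<dots> = (\<Sum>i<a. \<Sum>k<b. \<integral>p. (u i * v k) * Ablk p i k \<partial>M)"
      by (intro sum.cong refl Bochner_Integration.integral_sum Bochner_Integration.integrable_mult_left) (use cen in auto)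
    also have "\<dots> = 0"
      using cen by (intro sum.neutral ballI) (simp add: integral_mult_left_zero)
    finally have meanY: "(\<integral>p. Y u v p \<partial>M) = 0" unfolding Yeq .
    obtain m where med: "is_median M (Y u v) m" using median_exists[OF P Ym[OF uv]] by blast
    have mb: "\<bar>m\<bar> \<le> 4 * (2 * \<rho>)"
      using median_mean_zero[OF P sg \<rho> lipY[OF uv] _ Ym[OF uv] intY meanY med] by simp
    have pos: "sqrt (\<Lambda> * (a + b) + s\<^sup>2) > 0" using a \<Lambda>0 unfolding \<Lambda>_def by (intro real_sqrt_gt_zero add_pos_nonneg) auto
    have tpos: "T - 8 * \<rho> > 0" unfolding T_def using pos \<rho> by simp
    have "{p\<in>space M. Y u v p > T} \<subseteq> {p\<in>space M. \<bar>Y u v p - m\<bar> \<ge> T - 8 * \<rho>}" using mb by auto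
    then have h1: "measure M {p\<in>space M. Y u v p > T} \<le> measure M {p\<in>space M. \<bar>Y u v p - m\<bar> \<ge> T - 8 * \<rho>}"
      using Ym[OF uv] by (intro finite_measure_mono) measurable
    have h2: "measure M {p\<in>space M. \<bar>Y u v p - m\<bar> \<ge> T - 8 * \<rho>} \<le> 2 * exp (- (T - 8 * \<rho>)\<^sup>2 / (2 * \<rho>)\<^sup>2)"
      by (rule conc_scaled[OF sg lipY[OF uv] _ med tpos]) simp
    have h3: "- (T - 8 * \<rho>)\<^sup>2 / (2 * \<rho>)\<^sup>2 = - (\<Lambda> * (a + b) + s\<^sup>2)"
      unfolding T_def using \<rho> \<Lambda>0 a by (simp add: power_mult_distrib add_nonneg_nonneg)
    show ?thesis using h1 h2 unfolding h3 by linarith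
  qed
  define Ev where "Ev x = {p\<in>space M. Y (fst x) (snd x) p > T}" for x
  define Bd where "Bd = (\<Union>x\<in>Na \<times> Nb. Ev x)"
  have Evm: "Ev x \<in> sets M" if "x \<in> Na \<times> Nb" for x
  proof -
    have "Y (fst x) (snd x) \<in> borel_measurable M" using Ym[of "fst x" "snd x"] that by (auto simp: mem_Times_iff)
    then show ?thesis unfolding Ev_def by measurable
  qed
  have Bdm: "Bd \<in> sets M" unfolding Bd_def using Evm Na(1) Nb(1)
    by (intro sets.finite_UN) auto
  define G where "G = space M - Bd"
  have Gm: "G \<in> sets M" unfolding G_def using Bdm by auto
  have "measure M (space M - G) = measure M Bd" unfolding G_def using Bdm sets.sets_into_space by (simp add: Diff_Diff_Int inf.absorb2)
  also have "\<dots> \<le> (\<Sum>x\<in>Na \<times> Nb. measure M (Ev x))"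
    unfolding Bd_def using Evm Na(1) Nb(1)
    by (intro finite_measure_subadditive_finite) auto
  also have "\<dots> \<le> (\<Sum>x\<in>Na \<times> Nb. 2 * exp (- (\<Lambda> * (a + b) + s\<^sup>2)))"
  proof (intro sum_mono)
    fix x assume "x \<in> Na \<times> Nb"
    then show "measure M (Ev x) \<le> 2 * exp (- (\<Lambda> * (a + b) + s\<^sup>2))"
      unfolding Ev_def using tail[of "fst x" "snd x"] by (auto simp: mem_Times_iff)
  qed
  also have "\<dots> = real (card Na) * real (card Nb) * (2 * exp (- (\<Lambda> * (a + b) + s\<^sup>2)))"
    by (simp add: card_cartesian_product)
  also have "\<dots> \<le> 96^a * 96^b * (2 * exp (- (\<Lambda> * (a + b) + s\<^sup>2)))"
    using Na(2) Nb(2) by (intro mult_right_mono mult_mono) auto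
  also have "96^a * 96^b * (2 * exp (- (\<Lambda> * (a + b) + s\<^sup>2))) = 2 * exp (- s\<^sup>2)"
  proof -
    have "(96::real)^a * 96^b = exp (\<Lambda> * (a + b))"
    proof -
      have "exp (\<Lambda> * (a + b)) = exp (real (a + b) * ln 96)" unfolding \<Lambda>_def by (simp add: mult.commute)
      also have "\<dots> = (exp (ln 96))^(a + b)" by (rule exp_of_nat_mult)
      also have "\<dots> = 96^(a+b)" by simp
      finally show ?thesis by (simp add: power_add)
    qed
    then show ?thesis by (simp add: exp_add[symmetric] exp_minus field_simps)
  qed
  finally have PG: "measure M (space M - G) \<le> 2 * exp (- s\<^sup>2)" .
  have opbG: "opb a b (Ablk p) (\<rho> * (24 + 18 * (sqrt a + sqrt b) + 6 * s))" if "p \<in> G" for p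
  proof -
    have "\<forall>u\<in>Na. \<forall>v\<in>Nb. bil a b (Ablk p) u v \<le> T"
      using that unfolding G_def Bd_def Ev_def Y_def spM by (auto simp: not_less)
    then have "opb a b (Ablk p) (3 * T)" using net_opb[OF Na(4) Na(3) Nb(4)] by blast
    moreover have "3 * T \<le> \<rho> * (24 + 18 * (sqrt a + sqrt b) + 6 * s)"
    proof -
      have "sqrt (\<Lambda> * (a + b) + s\<^sup>2) = sqrt (\<Lambda> * a + \<Lambda> * b + s\<^sup>2)" by (simp add: algebra_simps)
      also have "\<dots> \<le> sqrt (\<Lambda> * a) + sqrt (\<Lambda> * b) + sqrt (s\<^sup>2)" using \<Lambda>0 by (intro sqrt3_le) auto
      also have "\<dots> = sqrt \<Lambda> * (sqrt a + sqrt b) + s" using s by (simp add: real_sqrt_mult algebra_simps)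
      also have "\<dots> \<le> 3 * (sqrt a + sqrt b) + s"
      proof -
        have "sqrt \<Lambda> \<le> sqrt 9" unfolding \<Lambda>_def using ln96 by (rule real_sqrt_le_mono)
        then have "sqrt \<Lambda> \<le> 3" by simp
        then show ?thesis by (intro add_right_mono mult_right_mono) auto
      qed
      finally have "sqrt (\<Lambda> * (a + b) + s\<^sup>2) \<le> 3 * (sqrt a + sqrt b) + s" .
      then have "\<rho> * sqrt (\<Lambda> * (a + b) + s\<^sup>2) \<le> \<rho> * (3 * (sqrt a + sqrt b) + s)"
        using \<rho> by (intro mult_left_mono) auto
      then show ?thesis unfolding T_def by (simp add: algebra_simps)
    qed
    ultimately show ?thesis by (rule opb_mono)
  qed
  show ?thesis using Gm opbG PG by blast
qed

section \<open>Lipschitz extension and transfer of concentration\<close>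

lemma exp4: "2 * exp (-4::real) < 1/4"
proof -
  have e1: "exp (1::real) \<ge> 2" using exp_ge_add_one_self[of 1] by simp
  have "(2::real)^4 \<le> (exp 1)^4" by (rule power_mono[OF e1]) simp
  also have "(exp (1::real))^4 = exp 4" using exp_of_nat_mult[of 4 "1::real"] by simp
  finally have "16 \<le> exp (4::real)" by simp
  then show ?thesis by (simp add: exp_minus field_simps)
qed

lemma mcshane:
  fixes Y :: "params \<Rightarrow> real"
  assumes G: "G \<noteq> {}" and K: "K \<ge> 0"
    and lipG: "\<And>p q. p \<in> G \<Longrightarrow> q \<in> G \<Longrightarrow> \<bar>Y p - Y q\<bar> \<le> K * param_dist L n dims p q"
  shows "\<exists>H. (\<forall>p q. \<bar>H p - H q\<bar> \<le> K * param_dist L n dims p q) \<and> (\<forall>p\<in>G. H p = Y p)"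
proof -
  let ?d = "param_dist L n dims"
  obtain q0 where q0: "q0 \<in> G" using G by auto
  define H where "H p = Inf ((\<lambda>q. Y q + K * ?d p q) ` G)" for p
  have bdd: "bdd_below ((\<lambda>q. Y q + K * ?d p q) ` G)" for p
  proof (rule bdd_belowI2)
    fix q assume q: "q \<in> G"
    have "Y q0 - Y q \<le> K * ?d q0 q" using lipG[OF q0 q] by simp
    also have "\<dots> \<le> K * (?d q0 p + ?d p q)" using K param_dist_triangle[of L n dims q0 q p] by (intro mult_left_mono) auto
    finally show "Y q0 - K * ?d q0 p \<le> Y q + K * ?d p q" by (simp add: algebra_simps)
  qed
  have Hle: "H p \<le> Y q + K * ?d p q" if "q \<in> G" for p q
    unfolding H_def using that bdd by (intro cInf_lower) auto
  have Hge: "H p \<ge> z" if "\<And>q. q \<in> G \<Longrightarrow> z \<le> Y q + K * ?d p q" for p z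
    unfolding H_def using that G by (intro cInf_greatest) auto
  have lip1: "H p \<le> H p' + K * ?d p p'" for p p'
  proof -
    have "H p - K * ?d p p' \<le> H p'"
    proof (rule Hge)
      fix q assume q: "q \<in> G"
      have "H p \<le> Y q + K * ?d p q" by (rule Hle[OF q])
      also have "\<dots> \<le> Y q + K * (?d p p' + ?d p' q)" using K param_dist_triangle[of L n dims p q p'] by (intro add_left_mono mult_left_mono) auto
      finally show "H p - K * ?d p p' \<le> Y q + K * ?d p' q" by (simp add: algebra_simps)
    qed
    then show ?thesis by simp
  qed
  have "\<bar>H p - H q\<bar> \<le> K * ?d p q" for p q
    using lip1[of p q] lip1[of q p] param_dist_sym[of L n dims p q] by (simp add: abs_le_iff)
  moreover have "H p = Y p" if "p \<in> G" for p
  proof (rule antisym)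
    show "H p \<le> Y p" using Hle[OF that, of p] by (simp add: param_dist_self)
    show "Y p \<le> H p"
    proof (rule Hge)
      fix q assume q: "q \<in> G"
      show "Y p \<le> Y q + K * ?d p q" using lipG[OF that q] by (simp add: abs_le_iff)
    qed
  qed
  ultimately show ?thesis by blast
qed

lemma transfer:
  fixes M :: "params measure" and Y :: "params \<Rightarrow> real"
  assumes P: "prob_space M" and sM: "sets M = sets borel"
    and sg: "subgauss_conc M (param_dist L n dims) \<rho>" and \<rho>: "\<rho> > 0"
    and Gm: "G \<in> sets M" and PG: "measure M (space M - G) \<le> \<delta>" and \<delta>: "\<delta> \<le> 1/4"
    and K: "K > 0"
    and lipG: "\<And>p q. p \<in> G \<Longrightarrow> q \<in> G \<Longrightarrow> \<bar>Y p - Y q\<bar> \<le> K * param_dist L n dims p q"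
    and med: "is_median M Y m" and t: "t > 2 * K * \<rho>"
  shows "measure M {p\<in>space M. \<bar>Y p - m\<bar> \<ge> t} \<le> \<delta> + 2 * exp (- (t - 2 * K * \<rho>)\<^sup>2 / (K * \<rho>)\<^sup>2)"
proof -
  interpret prob_space M by fact
  have spM: "space M = UNIV" using sM by (rule space_borel_M)
  have Gne: "G \<noteq> {}"
  proof
    assume "G = {}"
    then have "measure M (space M - G) = 1" by (simp add: prob_space)
    then show False using PG \<delta> by simp
  qed
  obtain H where lipH: "\<And>p q. \<bar>H p - H q\<bar> \<le> K * param_dist L n dims p q" and HY: "\<And>p. p \<in> G \<Longrightarrow> H p = Y p"
    using mcshane[OF Gne _ lipG] K by fastforce
  have Hm: "H \<in> borel_measurable M" using lipschitz_measurable[OF lipH sM] .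
  obtain mH where medH: "is_median M H mH" using median_exists[OF P Hm] by blast
  have Bm: "space M - G \<in> sets M" using Gm by auto
  have conc: "measure M {p\<in>space M. \<bar>H p - mH\<bar> \<ge> x} \<le> 2 * exp (- x\<^sup>2 / (K * \<rho>)\<^sup>2)" if "x > 0" for x
    by (rule conc_scaled[OF sg lipH K medH that])
  have small: "measure M {p\<in>space M. \<bar>H p - mH\<bar> \<ge> x} < 1/4" if "x > 2 * K * \<rho>" for x
  proof -
    have Kr: "K * \<rho> > 0" using K \<rho> by simp
    have "2 * K * \<rho> > 0" using Kr by simp
    then have x0: "x > 0" using that by linarith
    have "(2 * K * \<rho>)\<^sup>2 \<le> x\<^sup>2" using that Kr by (intro power_mono) auto
    moreover have "(2 * K * \<rho>)\<^sup>2 = 4 * (K * \<rho>)\<^sup>2" by (simp add: power_mult_distrib)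
    moreover have "(K * \<rho>)\<^sup>2 > 0" using K \<rho> by simp
    ultimately have "4 \<le> x\<^sup>2 / (K * \<rho>)\<^sup>2" by (simp add: le_divide_eq)
    then have "exp (- x\<^sup>2 / (K * \<rho>)\<^sup>2) \<le> exp (-4)" by simp
    then have "2 * exp (- x\<^sup>2 / (K * \<rho>)\<^sup>2) < 1/4" using exp4 by linarith
    then show ?thesis using conc[OF x0] by linarith
  qed
  have mclose: "\<bar>m - mH\<bar> \<le> 2 * K * \<rho>"
  proof (rule ccontr)
    assume "\<not> ?thesis"
    then have far: "\<bar>m - mH\<bar> > 2 * K * \<rho>" by simp
    show False
    proof (cases "m \<ge> mH")
      case True
      have "{p\<in>space M. Y p \<ge> m} \<subseteq> {p\<in>space M. \<bar>H p - mH\<bar> \<ge> \<bar>m - mH\<bar>} \<union> (space M - G)"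
        using HY True by auto
      then have "measure M {p\<in>space M. Y p \<ge> m} \<le> measure M ({p\<in>space M. \<bar>H p - mH\<bar> \<ge> \<bar>m - mH\<bar>} \<union> (space M - G))"
        using Hm Bm by (intro finite_measure_mono) measurable
      also have "\<dots> \<le> measure M {p\<in>space M. \<bar>H p - mH\<bar> \<ge> \<bar>m - mH\<bar>} + measure M (space M - G)"
        using Hm Bm by (intro measure_Un_le) measurable
      also have "\<dots> < 1/4 + 1/4" using small[OF far] PG \<delta> by linarith
      finally show False using med unfolding is_median_def by linarith
    next
      case False
      have "{p\<in>space M. Y p \<le> m} \<subseteq> {p\<in>space M. \<bar>H p - mH\<bar> \<ge> \<bar>m - mH\<bar>} \<union> (space M - G)"
        using HY False by auto
      then have "measure M {p\<in>space M. Y p \<le> m} \<le> measure M ({p\<in>space M. \<bar>H p - mH\<bar> \<ge> \<bar>m - mH\<bar>} \<union> (space M - G))"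
        using Hm Bm by (intro finite_measure_mono) measurable
      also have "\<dots> \<le> measure M {p\<in>space M. \<bar>H p - mH\<bar> \<ge> \<bar>m - mH\<bar>} + measure M (space M - G)"
        using Hm Bm by (intro measure_Un_le) measurable
      also have "\<dots> < 1/4 + 1/4" using small[OF far] PG \<delta> by linarith
      finally show False using med unfolding is_median_def by linarith
    qed
  qed
  have "{p\<in>space M. \<bar>Y p - m\<bar> \<ge> t} \<subseteq> {p\<in>space M. \<bar>H p - mH\<bar> \<ge> t - 2 * K * \<rho>} \<union> (space M - G)"
    using HY mclose by force
  then have "measure M {p\<in>space M. \<bar>Y p - m\<bar> \<ge> t} \<le> measure M ({p\<in>space M. \<bar>H p - mH\<bar> \<ge> t - 2 * K * \<rho>} \<union> (space M - G))"
    using Hm Bm by (intro finite_measure_mono) measurable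
  also have "\<dots> \<le> measure M {p\<in>space M. \<bar>H p - mH\<bar> \<ge> t - 2 * K * \<rho>} + measure M (space M - G)"
    using Hm Bm by (intro measure_Un_le) measurable
  also have "\<dots> \<le> 2 * exp (- (t - 2 * K * \<rho>)\<^sup>2 / (K * \<rho>)\<^sup>2) + \<delta>"
    using conc[of "t - 2 * K * \<rho>"] t PG by simp
  finally show ?thesis by simp
qed

section \<open>Layer-wise Lipschitz estimates\<close>

lemma hsn_L2: "hsn a b A = L2_set (\<lambda>(i,j). A i j) ({..<a} \<times> {..<b})"
  unfolding hsn_def L2_set_def by (simp add: sum.cartesian_product case_prod_beta)

lemma hsn_add: "hsn a b (\<lambda>i j. A i j + B i j) \<le> hsn a b A + hsn a b B"
proof -
  have "hsn a b (\<lambda>i j. A i j + B i j) = L2_set (\<lambda>x. (case x of (i,j) \<Rightarrow> A i j) + (case x of (i,j) \<Rightarrow> B i j)) ({..<a} \<times> {..<b})"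
    unfolding hsn_L2 by (intro L2_set_cong) auto
  also have "\<dots> \<le> hsn a b A + hsn a b B" unfolding hsn_L2 by (rule L2_set_triangle_ineq)
  finally show ?thesis .
qed

lemma opb_hsn: "opb a b A (hsn a b A)"
  unfolding opb_def using bil_hs by (metis abs_le_D1 mult.commute mult.left_commute)

lemma opb_div:
  assumes "opb a b A R" "c > 0"
  shows "opb a b (\<lambda>i k. A i k / c) (R / c)"
proof -
  have "bil a b (\<lambda>i k. A i k / c) u v = bil a b A u v / c" for u v
    unfolding bil_def by (simp add: sum_divide_distrib)
  then show ?thesis using assms unfolding opb_def by (simp add: divide_right_mono)
qed

lemma Zlayer_Suc_abs:
  assumes "\<forall>x. \<bar>\<sigma> l x\<bar> \<le> \<kappa>"
  shows "\<bar>Zlayer dims \<sigma> p (Suc l) i j\<bar> \<le> \<kappa> / sqrt (dims (Suc l))"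
  using assms by (simp add: abs_div divide_right_mono)

lemma hsn_Zlayer_Suc:
  assumes "\<forall>x. \<bar>\<sigma> l x\<bar> \<le> \<kappa>" "dims (Suc l) > 0"
  shows "hsn (dims (Suc l)) n (Zlayer dims \<sigma> p (Suc l)) \<le> \<kappa> * sqrt n"
proof -
  have k0: "\<kappa> \<ge> 0" using assms(1) by (meson abs_ge_zero order_trans)
  have "(\<Sum>i<dims (Suc l). \<Sum>j<n. (Zlayer dims \<sigma> p (Suc l) i j)\<^sup>2) \<le> (\<Sum>i<dims (Suc l). \<Sum>j<n. (\<kappa> / sqrt (dims (Suc l)))\<^sup>2)"
  proof (intro sum_mono)
    fix i j
    have "\<bar>Zlayer dims \<sigma> p (Suc l) i j\<bar> \<le> \<kappa> / sqrt (dims (Suc l))" using Zlayer_Suc_abs assms(1) by blast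
    then have "\<bar>Zlayer dims \<sigma> p (Suc l) i j\<bar>\<^sup>2 \<le> (\<kappa> / sqrt (dims (Suc l)))\<^sup>2" by (intro power_mono) auto
    then show "(Zlayer dims \<sigma> p (Suc l) i j)\<^sup>2 \<le> (\<kappa> / sqrt (dims (Suc l)))\<^sup>2" by (simp only: power2_abs)
  qed
  also have "\<dots> = (\<kappa> * sqrt n)\<^sup>2" using assms(2) by (simp add: power_divide power_mult_distrib)
  finally have "sqrt (\<Sum>i<dims (Suc l). \<Sum>j<n. (Zlayer dims \<sigma> p (Suc l) i j)\<^sup>2) \<le> sqrt ((\<kappa> * sqrt n)\<^sup>2)"
    by (rule real_sqrt_le_mono)
  then show ?thesis unfolding hsn_def using k0 by simp
qed

lemma layer_step:
  fixes p q :: params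
  assumes lip\<sigma>: "\<forall>x y. \<bar>\<sigma> l x - \<sigma> l y\<bar> \<le> lam * \<bar>x - y\<bar>" and lam: "lam \<ge> 0" and l: "l < L"
    and opbW: "opb (dims (Suc l)) (dims l) (pW p l) R" and R: "R \<ge> 0"
    and opbZ: "opb (dims l) n (Zlayer dims \<sigma> q l) \<zeta>" and \<zeta>: "\<zeta> \<ge> 0"
  shows "hs_dist (dims (Suc l)) n (Zlayer dims \<sigma> p (Suc l)) (Zlayer dims \<sigma> q (Suc l))
         \<le> lam / sqrt (dims (Suc l)) * (R * hs_dist (dims l) n (Zlayer dims \<sigma> p l) (Zlayer dims \<sigma> q l)
              + (\<zeta> + sqrt n) * param_dist L n dims p q)"
proof -
  let ?a = "dims (Suc l)" and ?b = "dims l"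
  let ?Zp = "Zlayer dims \<sigma> p l" and ?Zq = "Zlayer dims \<sigma> q l"
  let ?d = "param_dist L n dims p q"
  define xp where "xp i j = (\<Sum>k<?b. pW p l i k * ?Zp k j) + pB p l i" for i j
  define xq where "xq i j = (\<Sum>k<?b. pW q l i k * ?Zq k j) + pB q l i" for i j
  define T1 where "T1 = mm ?b (pW p l) (\<lambda>k j. ?Zp k j - ?Zq k j)"
  define T2 where "T2 = mm ?b (\<lambda>i k. pW p l i k - pW q l i k) ?Zq"
  define T3 where "T3 = (\<lambda>i (j::nat). pB p l i - pB q l i)"
  have dec: "xp i j - xq i j = T1 i j + T2 i j + T3 i j" for i j
    unfolding xp_def xq_def T1_def T2_def T3_def mm_def
    by (simp add: algebra_simps sum_subtractf[symmetric] sum.distrib[symmetric])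
  have "hs_dist ?a n (Zlayer dims \<sigma> p (Suc l)) (Zlayer dims \<sigma> q (Suc l))
        = sqrt (\<Sum>i<?a. \<Sum>j<n. ((\<sigma> l (xp i j) - \<sigma> l (xq i j)) / sqrt ?a)\<^sup>2)"
    unfolding hs_dist_def xp_def xq_def by (simp add: diff_divide_distrib)
  also have "\<dots> \<le> sqrt (\<Sum>i<?a. \<Sum>j<n. (lam / sqrt ?a)\<^sup>2 * (xp i j - xq i j)\<^sup>2)"
  proof (intro real_sqrt_le_mono sum_mono)
    fix i j
    have "\<bar>\<sigma> l (xp i j) - \<sigma> l (xq i j)\<bar> \<le> lam * \<bar>xp i j - xq i j\<bar>" using lip\<sigma> by blast
    then have "\<bar>\<sigma> l (xp i j) - \<sigma> l (xq i j)\<bar>\<^sup>2 \<le> (lam * \<bar>xp i j - xq i j\<bar>)\<^sup>2" by (intro power_mono) auto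
    then show "((\<sigma> l (xp i j) - \<sigma> l (xq i j)) / sqrt ?a)\<^sup>2 \<le> (lam / sqrt ?a)\<^sup>2 * (xp i j - xq i j)\<^sup>2"
      by (simp add: power_divide power_mult_distrib divide_right_mono)
  qed
  also have "\<dots> = lam / sqrt ?a * hsn ?a n (\<lambda>i j. xp i j - xq i j)"
    unfolding hsn_def using lam by (simp add: sum_distrib_left[symmetric] real_sqrt_mult real_sqrt_divide)
  finally have H1: "hs_dist ?a n (Zlayer dims \<sigma> p (Suc l)) (Zlayer dims \<sigma> q (Suc l)) \<le> lam / sqrt ?a * hsn ?a n (\<lambda>i j. xp i j - xq i j)" .
  have "hsn ?a n (\<lambda>i j. xp i j - xq i j) \<le> hsn ?a n T1 + hsn ?a n T2 + hsn ?a n T3"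
  proof -
    have "hsn ?a n (\<lambda>i j. xp i j - xq i j) = hsn ?a n (\<lambda>i j. (T1 i j + T2 i j) + T3 i j)" by (simp add: dec)
    also have "\<dots> \<le> hsn ?a n (\<lambda>i j. T1 i j + T2 i j) + hsn ?a n T3" by (rule hsn_add)
    also have "hsn ?a n (\<lambda>i j. T1 i j + T2 i j) \<le> hsn ?a n T1 + hsn ?a n T2" by (rule hsn_add)
    finally show ?thesis by simp
  qed
  also have "hsn ?a n T1 \<le> R * hs_dist ?b n ?Zp ?Zq"
    unfolding T1_def using opb_left[OF opbW R, of n "\<lambda>k j. ?Zp k j - ?Zq k j"] by (simp add: hsn_hs_dist)
  also have "hsn ?a n T2 \<le> \<zeta> * ?d"
  proof -
    have "hsn ?a n T2 \<le> \<zeta> * hsn ?a ?b (\<lambda>i k. pW p l i k - pW q l i k)"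
      unfolding T2_def by (rule opb_right[OF opbZ \<zeta>])
    also have "\<dots> \<le> \<zeta> * ?d" using dist_W_le[OF l, where dims=dims and p=p and q=q and n=n] \<zeta> by (simp add: hsn_hs_dist mult_left_mono)
    finally show ?thesis .
  qed
  also have "hsn ?a n T3 \<le> sqrt n * ?d"
  proof -
    have "hsn ?a n T3 = sqrt n * sqrt (\<Sum>i<?a. (pB p l i - pB q l i)\<^sup>2)"
      unfolding hsn_def T3_def by (simp add: real_sqrt_mult[symmetric] sum_distrib_left)
    also have "\<dots> \<le> sqrt n * ?d" using dist_B_le[OF l, where dims=dims and p=p and q=q and n=n] by (intro mult_left_mono) auto
    finally show ?thesis .
  qed
  finally have H2: "hsn ?a n (\<lambda>i j. xp i j - xq i j) \<le> R * hs_dist ?b n ?Zp ?Zq + \<zeta> * ?d + sqrt n * ?d" by simp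
  have "lam / sqrt ?a * hsn ?a n (\<lambda>i j. xp i j - xq i j) \<le> lam / sqrt ?a * (R * hs_dist ?b n ?Zp ?Zq + \<zeta> * ?d + sqrt n * ?d)"
    using H2 lam by (intro mult_left_mono) auto
  with H1 show ?thesis by (simp add: algebra_simps)
qed

definition etap :: "real \<Rightarrow> real" where "etap \<eta> = max \<eta> 1"
definition l8 :: "nat \<Rightarrow> real" where "l8 L = ln (8 * (real L + 1))"
definition rK :: "nat \<Rightarrow> real \<Rightarrow> real \<Rightarrow> real \<Rightarrow> real \<Rightarrow> real \<Rightarrow> real \<Rightarrow> real" where
  "rK L \<rho> lam \<kappa> \<alpha> \<beta> c = lam * \<rho> * (42 + 18 * sqrt \<beta> + 6 * sqrt (l8 L + 4 * c * \<kappa>\<^sup>2 * \<alpha>))"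
definition wK :: "real \<Rightarrow> real \<Rightarrow> real \<Rightarrow> real" where
  "wK lam \<kappa> \<alpha> = lam * (\<kappa> + 1) * sqrt \<alpha>"
definition xK :: "nat \<Rightarrow> real \<Rightarrow> real \<Rightarrow> real \<Rightarrow> real \<Rightarrow> real \<Rightarrow> real \<Rightarrow> real" where
  "xK L \<rho> lam \<kappa> \<alpha> \<eta> c = lam * \<rho> * (42 * sqrt (\<alpha> / etap \<eta>) + 18 * sqrt \<alpha> + 6 * sqrt ((l8 L + 4 * c * \<kappa>\<^sup>2) * \<alpha> / etap \<eta>))"
definition k1K :: "nat \<Rightarrow> real \<Rightarrow> real \<Rightarrow> real \<Rightarrow> real \<Rightarrow> real \<Rightarrow> real \<Rightarrow> real \<Rightarrow> real" where
  "k1K L \<rho> lam \<kappa> \<alpha> \<beta> \<eta> c = rK L \<rho> lam \<kappa> \<alpha> \<beta> c / sqrt (etap \<eta>) + xK L \<rho> lam \<kappa> \<alpha> \<eta> c + lam * sqrt \<alpha>"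
fun kseq :: "real \<Rightarrow> real \<Rightarrow> real \<Rightarrow> nat \<Rightarrow> real" where
  "kseq r w k1 0 = k1"
| "kseq r w k1 (Suc j) = r * kseq r w k1 j + w"
definition Kc :: "nat \<Rightarrow> real \<Rightarrow> real \<Rightarrow> real \<Rightarrow> real \<Rightarrow> real \<Rightarrow> real \<Rightarrow> real \<Rightarrow> real" where
  "Kc L \<rho> lam \<kappa> \<alpha> \<beta> \<eta> c = kseq (rK L \<rho> lam \<kappa> \<alpha> \<beta> c) (wK lam \<kappa> \<alpha>) (k1K L \<rho> lam \<kappa> \<alpha> \<beta> \<eta> c) (L - 1) + sqrt \<alpha>"

lemma l8_nonneg: "l8 L \<ge> 0" unfolding l8_def by simp

lemma kseq_nonneg: "r \<ge> 0 \<Longrightarrow> w \<ge> 0 \<Longrightarrow> k1 \<ge> 0 \<Longrightarrow> kseq r w k1 j \<ge> 0"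
  by (induction j) auto

lemma kseq_mono:
  assumes "0 \<le> r" "r \<le> r'" "0 \<le> w" "w \<le> w'" "0 \<le> k1" "k1 \<le> k1'"
  shows "kseq r w k1 j \<le> kseq r' w' k1' j"
proof (induction j)
  case 0 then show ?case using assms by simp
next
  case (Suc j)
  have "r * kseq r w k1 j \<le> r' * kseq r' w' k1' j"
    using Suc assms kseq_nonneg[of r w k1 j] by (intro mult_mono) auto
  then show ?case using assms by simp
qed

lemma sqrt_div_le: "x \<ge> 0 \<Longrightarrow> y > 0 \<Longrightarrow> x / y \<le> z \<Longrightarrow> sqrt x / sqrt y \<le> sqrt z"
  by (simp add: real_sqrt_divide[symmetric])

lemma N1:
  fixes a b n s c \<kappa> \<alpha> \<beta> lam \<rho> :: real
  assumes a: "a \<ge> 1" and b: "b \<ge> 0" and ba: "b / a \<le> \<beta>" and na: "n / a \<le> \<alpha>" and n: "n \<ge> 0"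
    and s: "s \<ge> 0" "s\<^sup>2 = l + 4 * c * \<kappa>\<^sup>2 * n" and l: "l \<ge> 0" and c: "c \<ge> 0"
    and lam: "lam \<ge> 0" and \<rho>: "\<rho> > 0"
  shows "lam * (\<rho> * (24 + 18 * (sqrt a + sqrt b) + 6 * s)) / sqrt a \<le> lam * \<rho> * (42 + 18 * sqrt \<beta> + 6 * sqrt (l + 4 * c * \<kappa>\<^sup>2 * \<alpha>))"
proof -
  have sa: "sqrt a \<ge> 1" using a by simp
  have e1: "24 / sqrt a \<le> 24" using sa by (simp add: divide_le_eq)
  have e2: "sqrt b / sqrt a \<le> sqrt \<beta>" using b a ba by (intro sqrt_div_le) auto
  have e3: "s / sqrt a \<le> sqrt (l + 4 * c * \<kappa>\<^sup>2 * \<alpha>)"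
  proof -
    have "s = sqrt (s\<^sup>2)" by (metis real_sqrt_abs abs_of_nonneg s(1))
    then have "s / sqrt a = sqrt (s\<^sup>2) / sqrt a" by simp
    also have "\<dots> \<le> sqrt (l + 4 * c * \<kappa>\<^sup>2 * \<alpha>)"
    proof (rule sqrt_div_le)
      show "0 \<le> s\<^sup>2" by simp
      show "0 < a" using a by simp
      have "s\<^sup>2 / a = l / a + 4 * c * \<kappa>\<^sup>2 * (n / a)" unfolding s(2) by (simp add: add_divide_distrib)
      also have "\<dots> \<le> l + 4 * c * \<kappa>\<^sup>2 * \<alpha>"
      proof (intro add_mono mult_left_mono)
        show "l / a \<le> l" using a l by (simp add: divide_le_eq mult_le_cancel_left1)
      qed (use na c in auto)
      finally show "s\<^sup>2 / a \<le> l + 4 * c * \<kappa>\<^sup>2 * \<alpha>" .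
    qed
    finally show ?thesis .
  qed
  have "(24 + 18 * (sqrt a + sqrt b) + 6 * s) / sqrt a = 24 / sqrt a + 18 + 18 * (sqrt b / sqrt a) + 6 * (s / sqrt a)"
    using sa by (simp add: field_simps)
  also have "\<dots> \<le> 24 + 18 + 18 * sqrt \<beta> + 6 * sqrt (l + 4 * c * \<kappa>\<^sup>2 * \<alpha>)"
    using e1 e2 e3 by linarith
  finally have "(24 + 18 * (sqrt a + sqrt b) + 6 * s) / sqrt a \<le> 42 + 18 * sqrt \<beta> + 6 * sqrt (l + 4 * c * \<kappa>\<^sup>2 * \<alpha>)" by simp
  then have "lam * \<rho> * ((24 + 18 * (sqrt a + sqrt b) + 6 * s) / sqrt a) \<le> lam * \<rho> * (42 + 18 * sqrt \<beta> + 6 * sqrt (l + 4 * c * \<kappa>\<^sup>2 * \<alpha>))"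
    using lam \<rho> by (intro mult_left_mono) auto
  then show ?thesis by (simp add: mult.assoc)
qed

lemma N2:
  fixes a n \<kappa> \<alpha> lam :: real
  assumes a: "a > 0" and n: "n \<ge> 0" and na: "n / a \<le> \<alpha>" and k: "\<kappa> \<ge> 0" and lam: "lam \<ge> 0"
  shows "lam / sqrt a * (\<kappa> * sqrt n + sqrt n) \<le> lam * (\<kappa> + 1) * sqrt \<alpha>"
proof -
  have "sqrt n / sqrt a \<le> sqrt \<alpha>" using n a na by (intro sqrt_div_le) auto
  then have "lam * (\<kappa> + 1) * (sqrt n / sqrt a) \<le> lam * (\<kappa> + 1) * sqrt \<alpha>" using lam k by (intro mult_left_mono) auto
  then show ?thesis by (simp add: field_simps)
qed

lemma N4:
  fixes a0 a1 n s c \<kappa> \<alpha> lam \<rho> l ep :: real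
  assumes a0: "a0 \<ge> ep" and ep: "ep \<ge> 1" and a1: "a1 \<ge> 1" and na: "n / a1 \<le> \<alpha>" and n: "n \<ge> 1"
    and s: "s \<ge> 0" "s\<^sup>2 = l + 4 * c * \<kappa>\<^sup>2 * n" and l: "l \<ge> 0" and c: "c \<ge> 0"
    and lam: "lam \<ge> 0" and \<rho>: "\<rho> > 0"
  shows "lam * (\<rho> * (24 + 18 * (sqrt a0 + sqrt n) + 6 * s)) / (sqrt a0 * sqrt a1)
         \<le> lam * \<rho> * (42 * sqrt (\<alpha> / ep) + 18 * sqrt \<alpha> + 6 * sqrt ((l + 4 * c * \<kappa>\<^sup>2) * \<alpha> / ep))"
proof -
  have a0p: "a0 > 0" using a0 ep by simp
  have a1p: "a1 > 0" using a1 by simp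
  have al: "1 / a1 \<le> \<alpha>" using na n a1p by (meson divide_right_mono order_trans less_imp_le)
  have al0: "\<alpha> \<ge> 0" using al a1p by (meson order_trans zero_le_divide_1_iff less_imp_le)
  have i1: "1 / (a0 * a1) \<le> \<alpha> / ep"
  proof -
    have "1 / (a0 * a1) = (1 / a0) * (1 / a1)" by simp
    also have "\<dots> \<le> (1 / ep) * \<alpha>" using a0 ep a0p a1p al by (intro mult_mono) (auto simp: divide_le_eq)
    finally show ?thesis by simp
  qed
  have i2: "n / (a0 * a1) \<le> \<alpha> / ep"
  proof -
    have "n / (a0 * a1) = (1 / a0) * (n / a1)" by simp
    also have "\<dots> \<le> (1 / ep) * \<alpha>" using a0 ep a0p na n a1p by (intro mult_mono) (auto simp: divide_le_eq)
    finally show ?thesis by simp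
  qed
  have sp: "sqrt a0 * sqrt a1 = sqrt (a0 * a1)" by (simp add: real_sqrt_mult)
  have e1: "1 / (sqrt a0 * sqrt a1) \<le> sqrt (\<alpha> / ep)"
    unfolding sp using i1 a0p a1p by (metis real_sqrt_divide real_sqrt_le_mono real_sqrt_one)
  have e2: "sqrt a0 / (sqrt a0 * sqrt a1) \<le> sqrt \<alpha>"
  proof -
    have "sqrt a0 / (sqrt a0 * sqrt a1) = sqrt 1 / sqrt a1" using a0p by simp
    also have "\<dots> \<le> sqrt \<alpha>" using al a1p by (intro sqrt_div_le) auto
    finally show ?thesis .
  qed
  have e3: "sqrt n / (sqrt a0 * sqrt a1) \<le> sqrt (\<alpha> / ep)"
    unfolding sp using i2 a0p a1p n by (intro sqrt_div_le) auto
  have e4: "s / (sqrt a0 * sqrt a1) \<le> sqrt ((l + 4 * c * \<kappa>\<^sup>2) * \<alpha> / ep)"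
  proof -
    have "s = sqrt (s\<^sup>2)" by (metis real_sqrt_abs abs_of_nonneg s(1))
    then have "s / (sqrt a0 * sqrt a1) = sqrt (s\<^sup>2) / sqrt (a0 * a1)" unfolding sp by simp
    also have "\<dots> \<le> sqrt ((l + 4 * c * \<kappa>\<^sup>2) * \<alpha> / ep)"
    proof (rule sqrt_div_le)
      show "0 \<le> s\<^sup>2" by simp
      show "0 < a0 * a1" using a0p a1p by simp
      have "s\<^sup>2 / (a0 * a1) = l * (1 / (a0 * a1)) + 4 * c * \<kappa>\<^sup>2 * (n / (a0 * a1))" unfolding s(2) by (simp add: add_divide_distrib)
      also have "\<dots> \<le> l * (\<alpha> / ep) + 4 * c * \<kappa>\<^sup>2 * (\<alpha> / ep)"
        using i1 i2 l c by (intro add_mono mult_left_mono) auto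
      also have "\<dots> = (l + 4 * c * \<kappa>\<^sup>2) * \<alpha> / ep" by (simp add: algebra_simps add_divide_distrib)
      finally show "s\<^sup>2 / (a0 * a1) \<le> (l + 4 * c * \<kappa>\<^sup>2) * \<alpha> / ep" .
    qed
    finally show ?thesis .
  qed
  have "(24 + 18 * (sqrt a0 + sqrt n) + 6 * s) / (sqrt a0 * sqrt a1)
        = 24 * (1 / (sqrt a0 * sqrt a1)) + 18 * (sqrt a0 / (sqrt a0 * sqrt a1)) + 18 * (sqrt n / (sqrt a0 * sqrt a1)) + 6 * (s / (sqrt a0 * sqrt a1))"
    using a0p a1p by (simp add: field_simps)
  also have "\<dots> \<le> 24 * sqrt (\<alpha> / ep) + 18 * sqrt \<alpha> + 18 * sqrt (\<alpha> / ep) + 6 * sqrt ((l + 4 * c * \<kappa>\<^sup>2) * \<alpha> / ep)"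
    using e1 e2 e3 e4 by linarith
  finally have "(24 + 18 * (sqrt a0 + sqrt n) + 6 * s) / (sqrt a0 * sqrt a1) \<le> 42 * sqrt (\<alpha> / ep) + 18 * sqrt \<alpha> + 6 * sqrt ((l + 4 * c * \<kappa>\<^sup>2) * \<alpha> / ep)"
    by simp
  then have "lam * \<rho> * ((24 + 18 * (sqrt a0 + sqrt n) + 6 * s) / (sqrt a0 * sqrt a1)) \<le> lam * \<rho> * (42 * sqrt (\<alpha> / ep) + 18 * sqrt \<alpha> + 6 * sqrt ((l + 4 * c * \<kappa>\<^sup>2) * \<alpha> / ep))"
    using lam \<rho> by (intro mult_left_mono) auto
  then show ?thesis by (simp add: mult.assoc)
qed

lemma hs_dist_div: "c > 0 \<Longrightarrow> hs_dist a b (\<lambda>i j. A i j / c) (\<lambda>i j. B i j / c) = hs_dist a b A B / c"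
  unfolding hs_dist_def
  by (simp add: diff_divide_distrib[symmetric] power_divide sum_divide_distrib[symmetric] real_sqrt_divide)

lemma chain_bound:
  fixes p q :: params
  assumes L: "L > 0" and n: "n > 0" and dpos: "\<forall>l\<le>L. dims l > 0"
    and \<sigma>l: "\<forall>l<L. (\<forall>x y. \<bar>\<sigma> l x - \<sigma> l y\<bar> \<le> lam * \<bar>x - y\<bar>) \<and> (\<forall>x. \<bar>\<sigma> l x\<bar> \<le> \<kappa>)"
    and lam: "lam \<ge> 0" and \<kappa>: "\<kappa> \<ge> 0" and \<rho>: "\<rho> > 0" and c: "c \<ge> 0"
    and \<alpha>b: "\<forall>l\<in>{1..L}. real n / real (dims l) \<le> \<alpha>"
    and \<beta>b: "\<forall>l\<in>{1..L}. real (dims (l - 1)) / real (dims l) \<le> \<beta>"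
    and \<eta>b: "real (dims 0) \<ge> \<eta>"
    and s: "s = sqrt (l8 L + 4 * c * \<kappa>\<^sup>2 * n)"
    and opbW: "\<forall>l<L. opb (dims (Suc l)) (dims l) (pW p l) (\<rho> * (24 + 18 * (sqrt (dims (Suc l)) + sqrt (dims l)) + 6 * s))"
    and opbX: "opb (dims 0) n (pX q) (\<rho> * (24 + 18 * (sqrt (dims 0) + sqrt n) + 6 * s))"
  shows "hs_dist (dims L) n (Zlayer dims \<sigma> p L) (Zlayer dims \<sigma> q L)
         \<le> kseq (rK L \<rho> lam \<kappa> \<alpha> \<beta> c) (wK lam \<kappa> \<alpha>) (k1K L \<rho> lam \<kappa> \<alpha> \<beta> \<eta> c) (L - 1) * param_dist L n dims p q"
proof -
  let ?d = "param_dist L n dims p q"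
  let ?r = "rK L \<rho> lam \<kappa> \<alpha> \<beta> c" and ?w = "wK lam \<kappa> \<alpha>" and ?k1 = "k1K L \<rho> lam \<kappa> \<alpha> \<beta> \<eta> c"
  define R where "R l = \<rho> * (24 + 18 * (sqrt (dims (Suc l)) + sqrt (dims l)) + 6 * s)" for l
  define RX where "RX = \<rho> * (24 + 18 * (sqrt (dims 0) + sqrt n) + 6 * s)"
  have d0: "?d \<ge> 0" by (rule param_dist_nonneg)
  have s0: "s \<ge> 0" and s2: "s\<^sup>2 = l8 L + 4 * c * \<kappa>\<^sup>2 * n"
    unfolding s using l8_nonneg[of L] c by (auto intro!: add_nonneg_nonneg)
  have R0: "R l \<ge> 0" for l unfolding R_def using \<rho> s0 by simp
  have RX0: "RX \<ge> 0" unfolding RX_def using \<rho> s0 by simp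
  have n1: "real (dims l) \<ge> 1" if "l \<le> L" for l using dpos that by (simp add: Suc_le_eq)
  have \<alpha>l: "real n / real (dims (Suc l)) \<le> \<alpha>" if "l < L" for l using \<alpha>b that by auto
  have \<beta>l: "real (dims l) / real (dims (Suc l)) \<le> \<beta>" if "l < L" for l
  proof -
    have "Suc l \<in> {1..L}" using that by simp
    then have "real (dims (Suc l - 1)) / real (dims (Suc l)) \<le> \<beta>" using \<beta>b by blast
    then show ?thesis by simp
  qed
  have \<beta>0: "\<beta> \<ge> 0" using \<beta>l[OF L] by (meson order_trans divide_nonneg_nonneg of_nat_0_le_iff)
  have \<alpha>0: "\<alpha> \<ge> 0" using \<alpha>l[OF L] by (meson order_trans divide_nonneg_nonneg of_nat_0_le_iff)
  have ep: "etap \<eta> \<ge> 1" "real (dims 0) \<ge> etap \<eta>" unfolding etap_def using \<eta>b n1[of 0] by auto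
  have r0: "?r \<ge> 0" unfolding rK_def using lam \<rho> \<beta>0 \<alpha>0 c l8_nonneg[of L]
    by (intro mult_nonneg_nonneg add_nonneg_nonneg) auto
  have w0: "?w \<ge> 0" unfolding wK_def using lam \<kappa> \<alpha>0 by simp
  have x0: "xK L \<rho> lam \<kappa> \<alpha> \<eta> c \<ge> 0" unfolding xK_def using lam \<rho> \<alpha>0 ep l8_nonneg[of L] c
    by (intro mult_nonneg_nonneg add_nonneg_nonneg) (auto intro!: divide_nonneg_nonneg)
  have k10: "?k1 \<ge> 0" unfolding k1K_def
    by (intro add_nonneg_nonneg mult_nonneg_nonneg divide_nonneg_nonneg) (use r0 x0 lam \<alpha>0 ep in auto)
  have lipr: "lam / sqrt (dims (Suc l)) * R l \<le> ?r" if "l < L" for l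
  proof -
    have "lam * R l / sqrt (dims (Suc l)) \<le> ?r"
      unfolding R_def rK_def
      by (rule N1[OF n1[of "Suc l"] _ \<beta>l[OF that] \<alpha>l[OF that] _ s0 s2 l8_nonneg c lam \<rho>]) (use that in auto)
    then show ?thesis by simp
  qed
  have lipw: "lam / sqrt (dims (Suc l)) * (\<kappa> * sqrt n + sqrt n) \<le> ?w" if "l < L" for l
    unfolding wK_def using dpos that by (intro N2[OF _ _ \<alpha>l[OF that] \<kappa> lam]) auto
  have opbZ: "opb (dims (Suc j)) n (Zlayer dims \<sigma> q (Suc j)) (\<kappa> * sqrt n)" if "j < L" for j
    using opb_mono[OF opb_hsn hsn_Zlayer_Suc] \<sigma>l dpos that by auto
  have Z0q: "Zlayer dims \<sigma> q 0 = (\<lambda>i k. pX q i k / sqrt (dims 0))" by simp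
  have opbZ0: "opb (dims 0) n (Zlayer dims \<sigma> q 0) (RX / sqrt (dims 0))"
    unfolding Z0q RX_def using opbX dpos by (intro opb_div) auto
  have hs0: "hs_dist (dims 0) n (Zlayer dims \<sigma> p 0) (Zlayer dims \<sigma> q 0) \<le> ?d / sqrt (dims 0)"
  proof -
    have "hs_dist (dims 0) n (Zlayer dims \<sigma> p 0) (Zlayer dims \<sigma> q 0) = hs_dist (dims 0) n (pX p) (pX q) / sqrt (dims 0)"
      using dpos by (simp add: hs_dist_div[symmetric])
    also have "\<dots> \<le> ?d / sqrt (dims 0)" using dist_X_le[of dims n p q L] by (simp add: divide_right_mono)
    finally show ?thesis .
  qed
  have main: "j < L \<longrightarrow> hs_dist (dims (Suc j)) n (Zlayer dims \<sigma> p (Suc j)) (Zlayer dims \<sigma> q (Suc j)) \<le> kseq ?r ?w ?k1 j * ?d" for j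
  proof (induction j)
    case 0
    show ?case
    proof
      assume "0 < L"
      have step: "hs_dist (dims 1) n (Zlayer dims \<sigma> p 1) (Zlayer dims \<sigma> q 1)
           \<le> lam / sqrt (dims 1) * (R 0 * hs_dist (dims 0) n (Zlayer dims \<sigma> p 0) (Zlayer dims \<sigma> q 0) + (RX / sqrt (dims 0) + sqrt n) * ?d)"
        using layer_step[of \<sigma> 0 lam L dims p "R 0" n q "RX / sqrt (dims 0)"] \<sigma>l lam L opbW R0 opbZ0 RX0
        unfolding R_def by (auto simp: RX_def)
      also have "\<dots> \<le> lam / sqrt (dims 1) * (R 0 * (?d / sqrt (dims 0)) + (RX / sqrt (dims 0) + sqrt n) * ?d)"
        using hs0 R0 lam by (intro mult_left_mono add_right_mono) auto
      also have "\<dots> = ((lam / sqrt (dims 1) * R 0) / sqrt (dims 0) + lam * RX / (sqrt (dims 0) * sqrt (dims 1)) + lam * (sqrt n / sqrt (dims 1))) * ?d"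
      proof -
        have "sqrt (dims 0) > 0" "sqrt (dims 1) > 0" using dpos L by auto
        then show ?thesis by (simp add: field_simps)
      qed
      also have "\<dots> \<le> (?r / sqrt (etap \<eta>) + xK L \<rho> lam \<kappa> \<alpha> \<eta> c + lam * sqrt \<alpha>) * ?d"
      proof (intro mult_right_mono d0 add_mono)
        have "(lam / sqrt (dims 1) * R 0) / sqrt (dims 0) \<le> ?r / sqrt (dims 0)"
        proof -
          have "lam / sqrt (dims 1) * R 0 \<le> ?r" using lipr[OF L] by simp
          then show ?thesis by (rule divide_right_mono) simp
        qed
        also have "\<dots> \<le> ?r / sqrt (etap \<eta>)" using r0 ep by (intro divide_left_mono) auto
        finally show "(lam / sqrt (dims 1) * R 0) / sqrt (dims 0) \<le> ?r / sqrt (etap \<eta>)" .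
        show "lam * RX / (sqrt (dims 0) * sqrt (dims 1)) \<le> xK L \<rho> lam \<kappa> \<alpha> \<eta> c"
        proof -
          have one: "real (dims 1) \<ge> 1" using n1[of 1] L by simp
          have a1: "real n / real (dims 1) \<le> \<alpha>" using \<alpha>l[OF L] by simp
          show ?thesis unfolding RX_def xK_def
            by (rule N4[OF ep(2) ep(1) one a1 _ s0 s2 l8_nonneg c lam \<rho>]) (use n in auto)
        qed
        have "sqrt n / sqrt (dims 1) \<le> sqrt \<alpha>" using \<alpha>l[OF L] dpos L by (intro sqrt_div_le) auto
        then show "lam * (sqrt n / sqrt (dims 1)) \<le> lam * sqrt \<alpha>" using lam by (intro mult_left_mono) auto
      qed
      finally show "hs_dist (dims (Suc 0)) n (Zlayer dims \<sigma> p (Suc 0)) (Zlayer dims \<sigma> q (Suc 0)) \<le> kseq ?r ?w ?k1 0 * ?d"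
        by (simp add: k1K_def)
    qed
  next
    case (Suc j)
    show ?case
    proof
      assume jL: "Suc j < L"
      have IH: "hs_dist (dims (Suc j)) n (Zlayer dims \<sigma> p (Suc j)) (Zlayer dims \<sigma> q (Suc j)) \<le> kseq ?r ?w ?k1 j * ?d"
        using Suc jL by simp
      have kj: "kseq ?r ?w ?k1 j \<ge> 0" using r0 w0 k10 by (rule kseq_nonneg)
      have "hs_dist (dims (Suc (Suc j))) n (Zlayer dims \<sigma> p (Suc (Suc j))) (Zlayer dims \<sigma> q (Suc (Suc j)))
           \<le> lam / sqrt (dims (Suc (Suc j))) * (R (Suc j) * hs_dist (dims (Suc j)) n (Zlayer dims \<sigma> p (Suc j)) (Zlayer dims \<sigma> q (Suc j)) + (\<kappa> * sqrt n + sqrt n) * ?d)"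
        using layer_step[of \<sigma> "Suc j" lam L dims p "R (Suc j)" n q "\<kappa> * sqrt n"] \<sigma>l lam jL opbW R0 opbZ[of j] \<kappa>
        unfolding R_def by auto
      also have "\<dots> \<le> lam / sqrt (dims (Suc (Suc j))) * (R (Suc j) * (kseq ?r ?w ?k1 j * ?d) + (\<kappa> * sqrt n + sqrt n) * ?d)"
        using IH R0 lam by (intro mult_left_mono add_right_mono) auto
      also have "\<dots> = (lam / sqrt (dims (Suc (Suc j))) * R (Suc j)) * kseq ?r ?w ?k1 j * ?d + (lam / sqrt (dims (Suc (Suc j))) * (\<kappa> * sqrt n + sqrt n)) * ?d"
        by (simp add: algebra_simps)
      also have "\<dots> \<le> ?r * kseq ?r ?w ?k1 j * ?d + ?w * ?d"
        using lipr[OF jL] lipw[OF jL] kj d0 by (intro add_mono mult_right_mono) auto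
      finally show "hs_dist (dims (Suc (Suc j))) n (Zlayer dims \<sigma> p (Suc (Suc j))) (Zlayer dims \<sigma> q (Suc (Suc j))) \<le> kseq ?r ?w ?k1 (Suc j) * ?d"
        by (simp add: algebra_simps)
    qed
  qed
  have "Suc (L - 1) = L" using L by simp
  then show ?thesis using main[of "L - 1"] L by simp
qed

lemma ln2_gt_half: "ln (2::real) > 1/2"
proof -
  have "exp (1/2::real) * exp (1/2) = exp 1" by (simp flip: exp_add)
  also have "\<dots> \<le> 3" by (rule exp_le)
  finally have p: "exp (1/2::real) * exp (1/2) \<le> 3" .
  have "exp (1/2::real) < 2"
  proof (rule ccontr)
    assume "\<not> exp (1/2::real) < 2"
    then have "2 * 2 \<le> exp (1/2::real) * exp (1/2)" by (intro mult_mono) auto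
    then show False using p by simp
  qed
  then have "ln (exp (1/2::real)) < ln 2" by (subst ln_less_cancel_iff) auto
  then show ?thesis by simp
qed

lemma A1_facts:
  assumes "A1 L n dims \<sigma> M \<rho> lam \<kappa> \<alpha> \<beta> \<eta>"
  shows "lam \<ge> 0" "\<kappa> \<ge> 0" "\<alpha> > 0" "\<beta> \<ge> 0" "L > 0" "n > 0"
proof -
  have L: "L > 0" and l0: "\<forall>x y. \<bar>\<sigma> 0 x - \<sigma> 0 y\<bar> \<le> lam * \<bar>x - y\<bar>" and k0: "\<forall>x. \<bar>\<sigma> 0 x\<bar> \<le> \<kappa>"
    using assms unfolding A1_def by auto
  show "L > 0" by fact
  show "n > 0" using assms unfolding A1_def by auto
  have h: "\<bar>\<sigma> 0 1 - \<sigma> 0 0\<bar> \<le> lam * \<bar>1 - 0\<bar>" using l0 by blast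
  then show "lam \<ge> 0" using abs_ge_zero[of "\<sigma> 0 1 - \<sigma> 0 0"] by simp
  have h2: "\<bar>\<sigma> 0 0\<bar> \<le> \<kappa>" using k0 by blast
  then show "\<kappa> \<ge> 0" using abs_ge_zero[of "\<sigma> 0 0"] by linarith
  have bb: "\<forall>l\<in>{1..L}. real (dims (l - 1)) / real (dims l) \<le> \<beta>" and ab: "\<forall>l\<in>{1..L}. real n / real (dims l) \<le> \<alpha>"
    and d1: "dims 1 > 0" and n: "n > 0"
    using assms L unfolding A1_def by auto
  have one: "1 \<in> {1..L}" using L by simp
  have h3: "real n / real (dims 1) \<le> \<alpha>" "real (dims 0) / real (dims 1) \<le> \<beta>"
    using bspec[OF ab one] bspec[OF bb one] by simp_all
  have "real n / real (dims 1) > 0" using d1 n by simp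
  then show "\<alpha> > 0" using h3(1) by linarith
  have "real (dims 0) / real (dims 1) \<ge> 0" by simp
  then show "\<beta> \<ge> 0" using h3(2) by linarith
qed

lemma Kc_pos:
  assumes "lam \<ge> 0" "\<kappa> \<ge> 0" "\<alpha> > 0" "\<beta> \<ge> 0" "\<rho> > 0" "c \<ge> 0"
  shows "Kc L \<rho> lam \<kappa> \<alpha> \<beta> \<eta> c > 0"
proof -
  have ep: "etap \<eta> \<ge> 1" unfolding etap_def by simp
  have r0: "rK L \<rho> lam \<kappa> \<alpha> \<beta> c \<ge> 0" unfolding rK_def using assms l8_nonneg[of L]
    by (intro mult_nonneg_nonneg add_nonneg_nonneg) auto
  have w0: "wK lam \<kappa> \<alpha> \<ge> 0" unfolding wK_def using assms by simp
  have x0: "xK L \<rho> lam \<kappa> \<alpha> \<eta> c \<ge> 0" unfolding xK_def using assms ep l8_nonneg[of L]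
    by (intro mult_nonneg_nonneg add_nonneg_nonneg) (auto intro!: divide_nonneg_nonneg)
  have k10: "k1K L \<rho> lam \<kappa> \<alpha> \<beta> \<eta> c \<ge> 0" unfolding k1K_def
    by (intro add_nonneg_nonneg mult_nonneg_nonneg divide_nonneg_nonneg) (use r0 x0 assms ep in auto)
  show ?thesis unfolding Kc_def using kseq_nonneg[OF r0 w0 k10] assms by (simp add: add_nonneg_pos)
qed

lemma main_bound:
  fixes M :: "params measure" and F :: "(nat \<Rightarrow> nat \<Rightarrow> real) \<Rightarrow> real"
  assumes A: "A1 L n dims \<sigma> M \<rho> lam \<kappa> \<alpha> \<beta> \<eta>" and \<rho>: "\<rho> > 0" and c: "c > 0"
    and cK: "c * (Kc L \<rho> lam \<kappa> \<alpha> \<beta> \<eta> c * \<rho>)\<^sup>2 \<le> 1/100"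
    and F: "\<forall>A B. \<bar>F A - F B\<bar> \<le> hs_dist (dims L) n A B"
    and t: "t > 0" and med: "is_median M (\<lambda>p. F (Zlayer dims \<sigma> p L)) m"
  shows "measure M {p\<in>space M. \<bar>F (Zlayer dims \<sigma> p L) - m\<bar> \<ge> t} \<le> 2 * exp (- c * t\<^sup>2)"
proof -
  note AF = A1_facts[OF A]
  have L: "L > 0" and n: "n > 0" and dpos: "\<forall>l\<le>L. dims l > 0" and P: "prob_space M" and sM: "sets M = sets borel"
    and sg: "subgauss_conc M (param_dist L n dims) \<rho>"
    and cX: "\<forall>i<dims 0. \<forall>j<n. integrable M (\<lambda>p. pX p i j) \<and> (\<integral>p. pX p i j \<partial>M) = 0"
    and cW: "\<forall>l<L. \<forall>i<dims (Suc l). \<forall>k<dims l. integrable M (\<lambda>p. pW p l i k) \<and> (\<integral>p. pW p l i k \<partial>M) = 0"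
    and \<sigma>l: "\<forall>l<L. (\<forall>x y. \<bar>\<sigma> l x - \<sigma> l y\<bar> \<le> lam * \<bar>x - y\<bar>) \<and> (\<forall>x. \<bar>\<sigma> l x\<bar> \<le> \<kappa>)"
    and \<alpha>b: "\<forall>l\<in>{1..L}. real n / real (dims l) \<le> \<alpha>"
    and \<beta>b: "\<forall>l\<in>{1..L}. real (dims (l - 1)) / real (dims l) \<le> \<beta>"
    and \<eta>b: "real (dims 0) \<ge> \<eta>"
    using A unfolding A1_def by auto
  interpret prob_space M by fact
  have spM: "space M = UNIV" using sM by (rule space_borel_M)
  define K where "K = Kc L \<rho> lam \<kappa> \<alpha> \<beta> \<eta> c"
  have K: "K > 0" unfolding K_def using Kc_pos AF \<rho> c by simp
  define Y where "Y p = F (Zlayer dims \<sigma> p L)" for p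
  define s where "s = sqrt (l8 L + 4 * c * \<kappa>\<^sup>2 * n)"
  have s0: "s \<ge> 0" and s2: "s\<^sup>2 = l8 L + 4 * c * \<kappa>\<^sup>2 * n"
    unfolding s_def using l8_nonneg[of L] c by (auto intro!: add_nonneg_nonneg)
  have "\<exists>G\<in>sets M. (\<forall>p\<in>G. opb (dims 0) n (pX p) (\<rho> * (24 + 18 * (sqrt (dims 0) + sqrt n) + 6 * s)))
             \<and> measure M (space M - G) \<le> 2 * exp (- s\<^sup>2)"
    by (rule block_opb_event[OF P sM sg \<rho> dist_X_le _ _ _ s0]) (use cX dpos n in auto)
  then obtain GX where GX: "GX \<in> sets M" "\<forall>p\<in>GX. opb (dims 0) n (pX p) (\<rho> * (24 + 18 * (sqrt (dims 0) + sqrt n) + 6 * s))"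
    "measure M (space M - GX) \<le> 2 * exp (- s\<^sup>2)" by blast
  have "\<forall>l\<in>{..<L}. \<exists>G\<in>sets M. (\<forall>p\<in>G. opb (dims (Suc l)) (dims l) (pW p l) (\<rho> * (24 + 18 * (sqrt (dims (Suc l)) + sqrt (dims l)) + 6 * s)))
             \<and> measure M (space M - G) \<le> 2 * exp (- s\<^sup>2)"
  proof
    fix l assume l: "l \<in> {..<L}"
    show "\<exists>G\<in>sets M. (\<forall>p\<in>G. opb (dims (Suc l)) (dims l) (pW p l) (\<rho> * (24 + 18 * (sqrt (dims (Suc l)) + sqrt (dims l)) + 6 * s)))
             \<and> measure M (space M - G) \<le> 2 * exp (- s\<^sup>2)"
    proof (rule block_opb_event[OF P sM sg \<rho> dist_W_le _ _ _ s0])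
      show "l < L" using l by simp
    qed (use cW dpos l in auto)
  qed
  then have "\<forall>l\<in>{..<L}. \<exists>G. G \<in> sets M \<and> (\<forall>p\<in>G. opb (dims (Suc l)) (dims l) (pW p l) (\<rho> * (24 + 18 * (sqrt (dims (Suc l)) + sqrt (dims l)) + 6 * s)))
             \<and> measure M (space M - G) \<le> 2 * exp (- s\<^sup>2)" by (simp only: Bex_def)
  from bchoice[OF this] obtain Gf where Gf: "\<forall>l\<in>{..<L}. Gf l \<in> sets M \<and> (\<forall>p\<in>Gf l. opb (dims (Suc l)) (dims l) (pW p l) (\<rho> * (24 + 18 * (sqrt (dims (Suc l)) + sqrt (dims l)) + 6 * s)))
             \<and> measure M (space M - Gf l) \<le> 2 * exp (- s\<^sup>2)"
    by blast
  define G where "G = GX \<inter> (\<Inter>l\<in>{..<L}. Gf l)"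
  have Gm: "G \<in> sets M" unfolding G_def using GX(1) Gf L by auto
  define \<delta> where "\<delta> = exp (- (4 * c * \<kappa>\<^sup>2 * n)) / 4"
  have PG: "measure M (space M - G) \<le> \<delta>"
  proof -
    have "space M - G = (space M - GX) \<union> (\<Union>l\<in>{..<L}. space M - Gf l)" unfolding G_def by auto
    moreover have m1: "space M - GX \<in> sets M" using GX(1) by auto
    moreover have m2: "(\<Union>l\<in>{..<L}. space M - Gf l) \<in> sets M" using Gf by (intro sets.finite_UN) auto
    ultimately have "measure M (space M - G) \<le> measure M (space M - GX) + measure M (\<Union>l\<in>{..<L}. space M - Gf l)"
      using measure_Un_le[OF m1 m2] by simp
    also have "measure M (\<Union>l\<in>{..<L}. space M - Gf l) \<le> (\<Sum>l<L. measure M (space M - Gf l))"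
      using Gf by (intro finite_measure_subadditive_finite) auto
    also have "\<dots> \<le> (\<Sum>l<L. 2 * exp (- s\<^sup>2))" using Gf by (intro sum_mono) auto
    finally have "measure M (space M - G) \<le> (real L + 1) * (2 * exp (- s\<^sup>2))" using GX(3) by (simp add: algebra_simps)
    also have "(real L + 1) * (2 * exp (- s\<^sup>2)) = \<delta>"
    proof -
      have "exp (- s\<^sup>2) = exp (- l8 L) * exp (- (4 * c * \<kappa>\<^sup>2 * n))" unfolding s2 by (simp flip: exp_add)
      also have "exp (- l8 L) = 1 / (8 * (real L + 1))" unfolding l8_def by (simp add: exp_minus inverse_eq_divide)
      finally show ?thesis unfolding \<delta>_def by (simp add: field_simps)
    qed
    finally show ?thesis .
  qed
  have \<delta>q: "\<delta> \<le> 1/4" unfolding \<delta>_def using c n by simp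
  have lipG: "\<bar>Y p - Y q\<bar> \<le> K * param_dist L n dims p q" if "p \<in> G" "q \<in> G" for p q
  proof -
    have "\<bar>Y p - Y q\<bar> \<le> hs_dist (dims L) n (Zlayer dims \<sigma> p L) (Zlayer dims \<sigma> q L)" unfolding Y_def using F by blast
    also have "\<dots> \<le> kseq (rK L \<rho> lam \<kappa> \<alpha> \<beta> c) (wK lam \<kappa> \<alpha>) (k1K L \<rho> lam \<kappa> \<alpha> \<beta> \<eta> c) (L - 1) * param_dist L n dims p q"
      by (rule chain_bound[OF L n dpos \<sigma>l AF(1) AF(2) \<rho> _ \<alpha>b \<beta>b \<eta>b s_def])
         (use c that Gf GX(2) in \<open>auto simp: G_def\<close>)
    also have "\<dots> \<le> K * param_dist L n dims p q"
      unfolding K_def Kc_def using param_dist_nonneg[of L n dims p q] AF(3) by (intro mult_right_mono) auto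
    finally show ?thesis .
  qed
  have hsZ: "hsn (dims L) n (Zlayer dims \<sigma> p L) \<le> \<kappa> * sqrt n" for p
  proof -
    have "Suc (L - 1) = L" using L by simp
    moreover have "hsn (dims (Suc (L - 1))) n (Zlayer dims \<sigma> p (Suc (L - 1))) \<le> \<kappa> * sqrt n"
      using \<sigma>l dpos L by (intro hsn_Zlayer_Suc) auto
    ultimately show ?thesis by simp
  qed
  have Ydiff: "\<bar>Y p - Y q\<bar> \<le> 2 * \<kappa> * sqrt n" for p q
  proof -
    have "\<bar>Y p - Y q\<bar> \<le> hs_dist (dims L) n (Zlayer dims \<sigma> p L) (Zlayer dims \<sigma> q L)" unfolding Y_def using F by blast
    also have "\<dots> = hsn (dims L) n (\<lambda>i j. Zlayer dims \<sigma> p L i j + (- Zlayer dims \<sigma> q L i j))" by (simp add: hsn_hs_dist[symmetric])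
    also have "\<dots> \<le> hsn (dims L) n (Zlayer dims \<sigma> p L) + hsn (dims L) n (\<lambda>i j. - Zlayer dims \<sigma> q L i j)" by (rule hsn_add)
    also have "hsn (dims L) n (\<lambda>i j. - Zlayer dims \<sigma> q L i j) = hsn (dims L) n (Zlayer dims \<sigma> q L)" unfolding hsn_def by simp
    finally show ?thesis using hsZ[of p] hsZ[of q] by simp
  qed
  have ex1: "\<exists>p. Y p \<ge> m" and ex2: "\<exists>p. Y p \<le> m"
  proof -
    have h1: "measure M {p\<in>space M. Y p \<ge> m} \<ge> 1/2" and h2: "measure M {p\<in>space M. Y p \<le> m} \<ge> 1/2"
      using med unfolding is_median_def Y_def by auto
    have "{p\<in>space M. Y p \<ge> m} \<noteq> {}"
    proof
      assume e: "{p\<in>space M. Y p \<ge> m} = {}"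
      have "measure M {p\<in>space M. Y p \<ge> m} = measure M {}" by (simp only: e)
      then show False using h1 by simp
    qed
    moreover have "{p\<in>space M. Y p \<le> m} \<noteq> {}"
    proof
      assume e: "{p\<in>space M. Y p \<le> m} = {}"
      have "measure M {p\<in>space M. Y p \<le> m} = measure M {}" by (simp only: e)
      then show False using h2 by simp
    qed
    ultimately show "\<exists>p. Y p \<ge> m" "\<exists>p. Y p \<le> m" by auto
  qed
  have Ybound: "\<bar>Y p - m\<bar> \<le> 2 * \<kappa> * sqrt n" for p
  proof -
    obtain p1 where "Y p1 \<ge> m" using ex1 by blast
    obtain p2 where "Y p2 \<le> m" using ex2 by blast
    show ?thesis using Ydiff[of p p2] Ydiff[of p1 p] \<open>Y p1 \<ge> m\<close> \<open>Y p2 \<le> m\<close> by (simp add: abs_le_iff)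
  qed
  have medY: "is_median M Y m" using med unfolding Y_def .
  let ?P = "measure M {p\<in>space M. \<bar>Y p - m\<bar> \<ge> t}"
  have goal: "?P \<le> 2 * exp (- c * t\<^sup>2)"
  proof (cases "c * t\<^sup>2 \<le> ln 2")
    case True
    have "exp (- ln 2) \<le> exp (- c * t\<^sup>2)" using True by simp
    then have "1/2 \<le> exp (- c * t\<^sup>2)" by (simp add: exp_minus)
    then show ?thesis using prob_le_1[of "{p\<in>space M. \<bar>Y p - m\<bar> \<ge> t}"] by linarith
  next
    case False
    then have ct: "c * t\<^sup>2 > ln 2" by simp
    show ?thesis
    proof (cases "t > 2 * \<kappa> * sqrt n")
      case True
      have "{p\<in>space M. \<bar>Y p - m\<bar> \<ge> t} = {}"
      proof -
        have "\<not> (\<bar>Y p - m\<bar> \<ge> t)" for p using Ybound[of p] True by linarith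
        then show ?thesis by auto
      qed
      then have "?P = measure M {}" by (simp only:)
      then show ?thesis by simp
    next
      case False
      then have tD: "t \<le> 2 * \<kappa> * sqrt n" by simp
      have Kr: "K * \<rho> > 0" using K \<rho> by simp
      have cKr: "c * (K * \<rho>)\<^sup>2 \<le> 1/100" using cK unfolding K_def .
      have t7: "t \<ge> 7 * (K * \<rho>)"
      proof -
        have "1/2 < c * t\<^sup>2" using ct ln2_gt_half by linarith
        have "(7 * (K * \<rho>))\<^sup>2 \<le> t\<^sup>2"
        proof -
          have "c * (49 * (K * \<rho>)\<^sup>2) \<le> 49 / 100" using cKr by simp
          also have "\<dots> < c * t\<^sup>2" using \<open>1/2 < c * t\<^sup>2\<close> by simp
          finally have "49 * (K * \<rho>)\<^sup>2 < t\<^sup>2" using c by simp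
          then show ?thesis by (simp add: power_mult_distrib)
        qed
        then show ?thesis using t Kr by (meson power2_le_imp_le less_imp_le)
      qed
      have t2: "t > 2 * K * \<rho>" using t7 Kr by simp
      have tr: "?P \<le> \<delta> + 2 * exp (- (t - 2 * K * \<rho>)\<^sup>2 / (K * \<rho>)\<^sup>2)"
        by (rule transfer[OF P sM sg \<rho> Gm PG \<delta>q K lipG medY t2])
      have e1: "\<delta> \<le> exp (- c * t\<^sup>2) / 4"
      proof -
        have "t\<^sup>2 \<le> (2 * \<kappa> * sqrt n)\<^sup>2" using tD t by (intro power_mono) auto
        also have "\<dots> = 4 * \<kappa>\<^sup>2 * n" by (simp add: power_mult_distrib)
        finally have "c * t\<^sup>2 \<le> 4 * c * \<kappa>\<^sup>2 * n" using c by (simp add: mult_left_mono)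
        then show ?thesis unfolding \<delta>_def by simp
      qed
      have e2: "2 * exp (- (t - 2 * K * \<rho>)\<^sup>2 / (K * \<rho>)\<^sup>2) \<le> exp (- c * t\<^sup>2)"
      proof -
        have a: "(t - 2 * K * \<rho>)\<^sup>2 \<ge> (5/7 * t)\<^sup>2" using t7 Kr by (intro power_mono) auto
        have b: "(c * t\<^sup>2 + ln 2) * (K * \<rho>)\<^sup>2 \<le> t\<^sup>2 / 50"
        proof -
          have "(c * t\<^sup>2 + ln 2) * (K * \<rho>)\<^sup>2 \<le> (2 * c * t\<^sup>2) * (K * \<rho>)\<^sup>2" using ct Kr by (intro mult_right_mono) auto
          also have "\<dots> = 2 * t\<^sup>2 * (c * (K * \<rho>)\<^sup>2)" by (simp add: algebra_simps)
          also have "\<dots> \<le> 2 * t\<^sup>2 * (1/100)" using cKr by (intro mult_left_mono) auto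
          finally show ?thesis by simp
        qed
        have "(c * t\<^sup>2 + ln 2) * (K * \<rho>)\<^sup>2 \<le> (t - 2 * K * \<rho>)\<^sup>2"
        proof -
          have "(5/7 * t)\<^sup>2 = 25/49 * t\<^sup>2" by (simp add: power_mult_distrib power_divide)
          moreover have "t\<^sup>2 / 50 \<le> 25/49 * t\<^sup>2" by simp
          ultimately show ?thesis using a b by linarith
        qed
        moreover have "(K * \<rho>)\<^sup>2 > 0" using K \<rho> by simp
        ultimately have "c * t\<^sup>2 + ln 2 \<le> (t - 2 * K * \<rho>)\<^sup>2 / (K * \<rho>)\<^sup>2" by (simp add: le_divide_eq)
        then have "exp (- (t - 2 * K * \<rho>)\<^sup>2 / (K * \<rho>)\<^sup>2) \<le> exp (- (c * t\<^sup>2 + ln 2))" by simp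
        also have "\<dots> = exp (- c * t\<^sup>2) / 2" by (simp add: exp_diff exp_minus field_simps)
        finally show ?thesis by simp
      qed
      have "?P \<le> exp (- c * t\<^sup>2) / 4 + exp (- c * t\<^sup>2)" using tr e1 e2 by linarith
      also have "\<dots> \<le> 2 * exp (- c * t\<^sup>2)" by simp
      finally show ?thesis .
    qed
  qed
  then show ?thesis unfolding Y_def .
qed

lemma valid_if:
  assumes \<rho>: "\<rho> > 0" and c: "c > 0" and cK: "c * (Kc L \<rho> lam \<kappa> \<alpha> \<beta> \<eta> c * \<rho>)\<^sup>2 \<le> 1/100"
  shows "valid_const L \<rho> lam \<kappa> \<alpha> \<beta> \<eta> c"
  unfolding valid_const_def
proof (intro allI impI)
  fix n dims \<sigma> and M :: "params measure" and F :: "(nat \<Rightarrow> nat \<Rightarrow> real) \<Rightarrow> real" and t m :: real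
  assume A: "A1 L n dims \<sigma> M \<rho> lam \<kappa> \<alpha> \<beta> \<eta>" and F: "\<forall>A B. \<bar>F A - F B\<bar> \<le> hs_dist (dims L) n A B"
    and t: "t > 0" and med: "is_median M (\<lambda>p. F (Zlayer dims \<sigma> p L)) m"
  show "measure M {p \<in> space M. t \<le> \<bar>F (Zlayer dims \<sigma> p L) - m\<bar>} \<le> 2 * exp (- c * t\<^sup>2)"
    by (rule main_bound[OF A \<rho> c cK F t med])
qed

lemma valid_if': "\<rho> > 0 \<Longrightarrow> c > 0 \<Longrightarrow> c * (Kc L \<rho> lam \<kappa> \<alpha> \<beta> \<eta> c * \<rho>)\<^sup>2 \<le> 1/100 \<Longrightarrow> valid_const L \<rho> lam \<kappa> \<alpha> \<beta> \<eta> c"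
  by (rule valid_if)

lemma kseq_tendsto:
  assumes "(r \<longlongrightarrow> r0) F" "(w \<longlongrightarrow> w0) F" "(k \<longlongrightarrow> k0) F"
  shows "((\<lambda>x. kseq (r x) (w x) (k x) j) \<longlongrightarrow> kseq r0 w0 k0 j) F"
proof (induction j)
  case 0 then show ?case using assms by simp
next
  case (Suc j) then show ?case using assms by (simp add: tendsto_add tendsto_mult)
qed

lemma Kc_tendsto_c:
  "((\<lambda>c. Kc L \<rho> lam \<kappa> \<alpha> \<beta> \<eta> c) \<longlongrightarrow> Kc L \<rho> lam \<kappa> \<alpha> \<beta> \<eta> 0) (at_right 0)"
proof -
  have c0: "((\<lambda>c::real. c) \<longlongrightarrow> 0) (at_right 0)" by (rule tendsto_ident_at)
  have r: "((\<lambda>c. rK L \<rho> lam \<kappa> \<alpha> \<beta> c) \<longlongrightarrow> rK L \<rho> lam \<kappa> \<alpha> \<beta> 0) (at_right 0)"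
    unfolding rK_def by (intro tendsto_intros c0) 
  have x: "((\<lambda>c. xK L \<rho> lam \<kappa> \<alpha> \<eta> c) \<longlongrightarrow> xK L \<rho> lam \<kappa> \<alpha> \<eta> 0) (at_right 0)"
    unfolding xK_def by (intro tendsto_intros c0) (auto simp: etap_def)
  have k: "((\<lambda>c. k1K L \<rho> lam \<kappa> \<alpha> \<beta> \<eta> c) \<longlongrightarrow> k1K L \<rho> lam \<kappa> \<alpha> \<beta> \<eta> 0) (at_right 0)"
    unfolding k1K_def by (intro tendsto_intros r x) (auto simp: etap_def)
  show ?thesis unfolding Kc_def
    by (intro tendsto_intros kseq_tendsto r k)
qed

lemma part1:
  assumes \<rho>: "\<rho> > 0"
  shows "\<exists>c>0. valid_const L \<rho> lam \<kappa> \<alpha> \<beta> \<eta> c"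
proof -
  have "((\<lambda>c. c * (Kc L \<rho> lam \<kappa> \<alpha> \<beta> \<eta> c * \<rho>)\<^sup>2) \<longlongrightarrow> 0 * (Kc L \<rho> lam \<kappa> \<alpha> \<beta> \<eta> 0 * \<rho>)\<^sup>2) (at_right 0)"
    by (intro tendsto_intros Kc_tendsto_c)
  then have "eventually (\<lambda>c. c * (Kc L \<rho> lam \<kappa> \<alpha> \<beta> \<eta> c * \<rho>)\<^sup>2 < 1/100) (at_right 0)"
    by (intro order_tendstoD(2)) auto
  moreover have "eventually (\<lambda>c::real. c > 0) (at_right 0)" by (rule eventually_at_right_less)
  ultimately have "eventually (\<lambda>c. c > 0 \<and> c * (Kc L \<rho> lam \<kappa> \<alpha> \<beta> \<eta> c * \<rho>)\<^sup>2 < 1/100) (at_right 0)"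
    by (rule eventually_conj[rotated])
  then obtain c where "c > 0" "c * (Kc L \<rho> lam \<kappa> \<alpha> \<beta> \<eta> c * \<rho>)\<^sup>2 < 1/100"
    using eventually_happens[of _ "at_right (0::real)"] by (auto simp: trivial_limit_at_right_real)
  then show ?thesis using valid_if[OF \<rho>] by (intro exI[of _ c]) auto
qed

lemma kseq_zero: "kseq r 0 0 j = 0" by (induction j) auto

lemma Kc_tendsto_0:
  "((\<lambda>x. Kc L \<rho> lam \<kappa> (fst x) \<beta> (snd x) T) \<longlongrightarrow> 0) (at_right (0::real) \<times>\<^sub>F at_top)"
proof -
  let ?F = "at_right (0::real) \<times>\<^sub>F (at_top :: real filter)"
  have a0: "((\<lambda>x. fst x) \<longlongrightarrow> 0) ?F"
    by (rule filterlim_mono[OF filterlim_fst at_within_le_nhds order_refl])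
  have et: "filterlim (\<lambda>x. etap (snd x)) at_top ?F"
    by (rule filterlim_at_top_mono[OF filterlim_snd]) (auto simp: etap_def)
  have einf: "((\<lambda>x. inverse (etap (snd x))) \<longlongrightarrow> 0) ?F" by (rule tendsto_inverse_0_at_top[OF et])
  have sa: "((\<lambda>x. sqrt (fst x)) \<longlongrightarrow> 0) ?F" using tendsto_real_sqrt[OF a0] by simp
  have sq1: "((\<lambda>x. sqrt (fst x * inverse (etap (snd x)))) \<longlongrightarrow> 0) ?F"
    using tendsto_real_sqrt[OF tendsto_mult[OF a0 einf]] by simp
  have sq2: "((\<lambda>x. sqrt ((l8 L + 4 * T * \<kappa>\<^sup>2) * (fst x * inverse (etap (snd x))))) \<longlongrightarrow> 0) ?F"
    using tendsto_real_sqrt[OF tendsto_mult_left[OF tendsto_mult[OF a0 einf], of "l8 L + 4 * T * \<kappa>\<^sup>2"]] by simp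
  have si: "((\<lambda>x. sqrt (inverse (etap (snd x)))) \<longlongrightarrow> 0) ?F" using tendsto_real_sqrt[OF einf] by simp
  define r0 where "r0 = lam * \<rho> * (42 + 18 * sqrt \<beta> + 6 * sqrt (l8 L))"
  have rl: "((\<lambda>x. rK L \<rho> lam \<kappa> (fst x) \<beta> T) \<longlongrightarrow> r0) ?F"
  proof -
    have "((\<lambda>x. lam * \<rho> * (42 + 18 * sqrt \<beta> + 6 * sqrt (l8 L + 4 * T * \<kappa>\<^sup>2 * fst x))) \<longlongrightarrow>
          lam * \<rho> * (42 + 18 * sqrt \<beta> + 6 * sqrt (l8 L + 4 * T * \<kappa>\<^sup>2 * 0))) ?F"
      by (intro tendsto_intros a0)
    then show ?thesis unfolding rK_def r0_def by simp
  qed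
  have xl: "((\<lambda>x. xK L \<rho> lam \<kappa> (fst x) (snd x) T) \<longlongrightarrow> 0) ?F"
  proof -
    have e: "xK L \<rho> lam \<kappa> (fst x) (snd x) T = lam * \<rho> * (42 * sqrt (fst x * inverse (etap (snd x))) + 18 * sqrt (fst x)
              + 6 * sqrt ((l8 L + 4 * T * \<kappa>\<^sup>2) * (fst x * inverse (etap (snd x)))))" for x
      unfolding xK_def by (simp add: divide_inverse mult.assoc)
    have "((\<lambda>x. lam * \<rho> * (42 * sqrt (fst x * inverse (etap (snd x))) + 18 * sqrt (fst x)
              + 6 * sqrt ((l8 L + 4 * T * \<kappa>\<^sup>2) * (fst x * inverse (etap (snd x)))))) \<longlongrightarrow> lam * \<rho> * (42 * 0 + 18 * 0 + 6 * 0)) ?F"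
      by (intro tendsto_intros sq1 sa sq2)
    then show ?thesis unfolding e by simp
  qed
  have kl: "((\<lambda>x. k1K L \<rho> lam \<kappa> (fst x) \<beta> (snd x) T) \<longlongrightarrow> 0) ?F"
  proof -
    have e: "k1K L \<rho> lam \<kappa> (fst x) \<beta> (snd x) T = rK L \<rho> lam \<kappa> (fst x) \<beta> T * sqrt (inverse (etap (snd x)))
              + xK L \<rho> lam \<kappa> (fst x) (snd x) T + lam * sqrt (fst x)" for x
      unfolding k1K_def by (simp add: divide_inverse real_sqrt_inverse)
    have "((\<lambda>x. rK L \<rho> lam \<kappa> (fst x) \<beta> T * sqrt (inverse (etap (snd x)))
              + xK L \<rho> lam \<kappa> (fst x) (snd x) T + lam * sqrt (fst x)) \<longlongrightarrow> r0 * 0 + 0 + lam * 0) ?F"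
      by (intro tendsto_intros rl si xl sa)
    then show ?thesis unfolding e by simp
  qed
  have wl: "((\<lambda>x. wK lam \<kappa> (fst x)) \<longlongrightarrow> 0) ?F"
  proof -
    have "((\<lambda>x. lam * (\<kappa> + 1) * sqrt (fst x)) \<longlongrightarrow> lam * (\<kappa> + 1) * 0) ?F" by (intro tendsto_intros sa)
    then show ?thesis unfolding wK_def by simp
  qed
  have "((\<lambda>x. kseq (rK L \<rho> lam \<kappa> (fst x) \<beta> T) (wK lam \<kappa> (fst x)) (k1K L \<rho> lam \<kappa> (fst x) \<beta> (snd x) T) (L - 1)
          + sqrt (fst x)) \<longlongrightarrow> kseq r0 0 0 (L - 1) + 0) ?F"
    by (intro tendsto_intros kseq_tendsto rl wl kl sa)
  then show ?thesis unfolding Kc_def kseq_zero by simp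
qed

lemma part2:
  assumes \<rho>: "\<rho> > 0"
  shows "((\<lambda>(\<alpha>, \<eta>). c_opt L \<rho> lam \<kappa> \<alpha> \<beta> \<eta>) \<longlongrightarrow> \<infinity>) (at_right 0 \<times>\<^sub>F at_top)"
  unfolding tendsto_PInfty
proof
  fix B :: real
  define T where "T = max B 0 + 1"
  have T: "T > 0" "B < T" unfolding T_def by auto
  have "((\<lambda>x. T * (Kc L \<rho> lam \<kappa> (fst x) \<beta> (snd x) T * \<rho>)\<^sup>2) \<longlongrightarrow> T * (0 * \<rho>)\<^sup>2) (at_right (0::real) \<times>\<^sub>F at_top)"
    by (intro tendsto_intros Kc_tendsto_0)
  then have ev: "eventually (\<lambda>x. T * (Kc L \<rho> lam \<kappa> (fst x) \<beta> (snd x) T * \<rho>)\<^sup>2 < 1/100) (at_right (0::real) \<times>\<^sub>F at_top)"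
    by (intro order_tendstoD(2)) auto
  show "eventually (\<lambda>x. ereal B < (case x of (\<alpha>, \<eta>) \<Rightarrow> c_opt L \<rho> lam \<kappa> \<alpha> \<beta> \<eta>)) (at_right 0 \<times>\<^sub>F at_top)"
  proof (rule eventually_mono[OF ev])
    fix x :: "real \<times> real"
    assume h: "T * (Kc L \<rho> lam \<kappa> (fst x) \<beta> (snd x) T * \<rho>)\<^sup>2 < 1/100"
    have "valid_const L \<rho> lam \<kappa> (fst x) \<beta> (snd x) T" using h by (intro valid_if \<rho> T(1)) auto
    then have le: "ereal T \<le> c_opt L \<rho> lam \<kappa> (fst x) \<beta> (snd x)"
      unfolding c_opt_def using T(1) by (intro Sup_upper) auto
    have "ereal B < ereal T" using T by simp
    then have "ereal B < c_opt L \<rho> lam \<kappa> (fst x) \<beta> (snd x)" using le by (rule less_le_trans)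
    then show "ereal B < (case x of (\<alpha>, \<eta>) \<Rightarrow> c_opt L \<rho> lam \<kappa> \<alpha> \<beta> \<eta>)"
      by (simp add: case_prod_beta)
  qed
qed

theorem theorem3p1:
  shows "(\<forall>L \<rho> lam \<kappa> \<alpha> \<beta> \<eta>. \<rho> > 0 \<longrightarrow> (\<exists>c>0. valid_const L \<rho> lam \<kappa> \<alpha> \<beta> \<eta> c))
       \<and> (\<forall>L \<rho> lam \<kappa> \<beta>. \<rho> > 0 \<longrightarrow>
            ((\<lambda>(\<alpha>, \<eta>). c_opt L \<rho> lam \<kappa> \<alpha> \<beta> \<eta>) \<longlongrightarrow> \<infinity>) (at_right 0 \<times>\<^sub>F at_top))"
  using part1 part2 by blast

end
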